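(* Let $q$ be a prime power, $m\ge1$, $1\le k\le n$, $g_1,\dots,g_n\in\mathbb{F}_{q^m}$ linearly independent over $\mathbb{F}_q$, $\mathbf g=(g_1,\dots,g_n)$, $C$ the Gabidulin code defined below, $\mathbf r\in\mathbb{F}_{q^m}^n$, and $t:=\min\{d_R(\mathbf c,\mathbf r):\mathbf c\in C\}$. Let $\{b^{(1)},b^{(2)}\}$ be a minimal basis of the interpolation module $\mathfrak M(\mathbf r)$ with respect to the $(0,k-1)$-weighted term-over-position order with $\mathrm{lpos}(b^{(i)})=i$ ($i=1,2$), write $b^{(i)}=[b^{(i)}_1\ \ b^{(i)}_2]$, and let $\ell_i$ be the $(0,k-1)$-weighted $q$-degree of $b^{(i)}$. If $t\le(n-k)/2$, then $\ell_2=t+k-1$ (equivalently $\mathrm{qdeg}(b^{(2)}_2)=t$) and $\ell_1=n-t$.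
   Context: Write $[i]:=q^i$. A $q$-linearized polynomial is $f(x)=\sum_{i=0}^{d}a_ix^{[i]}$, $a_i\in\mathbb{F}_{q^m}$; if $a_d\ne0$, $d=\mathrm{qdeg}(f)$ ($\mathrm{qdeg}(0)=-\infty$). $\mathcal{L}_q(x,q^m)$ is the ring of these under addition and composition $\circ$. $\Pi_{\mathbf g}(x)=\prod_{u\in\langle g_1,\dots,g_n\rangle}(x-u)$ ($\mathbb{F}_q$-span), of $q$-degree $n$. $\Lambda_{\mathbf g,\mathbf r}(x)=\sum_{i=1}^n(-1)^{n-i}r_i\det(\mathfrak D_i(\mathbf g,x))/\det(M_n(g_1,\dots,g_n))$ ($M_n(v_1,\dots,v_s)$ the $n\times s$ matrix with $(j,l)$ entry $v_l^{[j-1]}$; $\mathfrak D_i(\mathbf g,x)$ is $M_n(g_1,\dots,g_n,x)$ without column $i$), with $\Lambda_{\mathbf g,\mathbf r}(g_i)=r_i$. $C=\{(m(g_1),\dots,m(g_n)):m\in\mathcal{L}_q(x,q^m),\ \mathrm{qdeg}(m)<k\}$. $d_R(\mathbf a,\mathbf b)$ is the $\mathbb{F}_q$-rank of the $m\times n$ $\mathbb{F}_q$-matrix obtained by expanding the coordinates of $\mathbf a-\mathbf b$ in a fixed $\mathbb{F}_q$-basis of $\mathbb{F}_{q^m}$. $\mathfrak M(\mathbf r)$ is the set of all $\beta\circ[\Pi_{\mathbf g}\ \ 0]+\gamma\circ[-\Lambda_{\mathbf g,\mathbf r}\ \ x]$, $\beta,\gamma\in\mathcal{L}_q(x,q^m)$,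 with $h\circ[f_1\ f_2]=[h\circ f_1\ \ h\circ f_2]$. Monomials: $x^{[i]}e_j$, $j\in\{1,2\}$. $(0,k-1)$-weighted term-over-position order: $w_1=0,w_2=k-1$, $x^{[i_1]}e_{j_1}<x^{[i_2]}e_{j_2}$ iff $i_1+w_{j_1}<i_2+w_{j_2}$ or (equality and $j_1<j_2$). $\mathrm{lm},\mathrm{lt},\mathrm{lpos}$: greatest monomial, its term, its coordinate. Weighted $q$-degree of $[f_1\ f_2]$: $\max\{\mathrm{qdeg} f_1,\mathrm{qdeg} f_2+k-1\}$. Basis: generating set with $\sum a_i\circ f^{(i)}=0\Rightarrow a_i=0$. $f$ reduces modulo a set $F$ of nonzero elements in one step if $h=f-\sum_i(b_ix^{[a_i]})\circ f^{(i)}$, $f^{(i)}\in F$, $b_i\in\mathbb{F}_{q^m}$, $a_i\ge0$, with $\mathrm{lm}(f)=x^{[a_i]}\circ\mathrm{lm}(f^{(i)})$ and $\mathrm{lt}(f)=\sum_i(b_ix^{[a_i]})\circ\mathrm{lt}(f^{(i)})$; a basis $B$ is minimal if no $b\in B$ can be reduced modulo $B\setminus\{b\}$. *)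

theory Defs
  imports "HOL-Computational_Algebra.Polynomial" "Jordan_Normal_Form.Determinant"
begin

(* Ambient field F_{q^m} is a finite field type 'a with CARD('a) = q^m.
   The subfield F_q is the fixed field of the q-Frobenius. *)
definition Fq :: "nat \<Rightarrow> 'a::field set" where
  "Fq q = {x. x ^ q = x}"

(* q-linearized polynomials, as genuine polynomials whose only
   monomials are x^(q^i); composition is pcompose. *)
definition linearized :: "nat \<Rightarrow> 'a::field poly \<Rightarrow> bool" where
  "linearized q f \<longleftrightarrow> (\<forall>j. coeff f j \<noteq> 0 \<longrightarrow> (\<exists>i. j = q ^ i))"

definition qdeg :: "nat \<Rightarrow> 'a::field poly \<Rightarrow> nat" where
  "qdeg q f = (THE d. degree f = q ^ d)"

definition xq :: "nat \<Rightarrow> nat \<Rightarrow> 'a::field poly" where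
  "xq q i = monom 1 (q ^ i)"

definition Fq_indep :: "nat \<Rightarrow> nat set \<Rightarrow> (nat \<Rightarrow> 'a::field) \<Rightarrow> bool" where
  "Fq_indep q S v \<longleftrightarrow>
     (\<forall>c. (\<forall>i\<in>S. c i \<in> Fq q) \<and> (\<Sum>i\<in>S. c i * v i) = 0 \<longrightarrow> (\<forall>i\<in>S. c i = 0))"

(* rank distance: F_q-rank of the m x n matrix of F_q-coordinates of a - b,
   i.e. the maximal number of F_q-linearly independent columns *)
definition rank_dist :: "nat \<Rightarrow> nat \<Rightarrow> (nat \<Rightarrow> 'a::field) \<Rightarrow> (nat \<Rightarrow> 'a) \<Rightarrow> nat" where
  "rank_dist q n a b = Max {card S | S. S \<subseteq> {..<n} \<and> Fq_indep q S (\<lambda>i. a i - b i)}"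

definition gabidulin :: "nat \<Rightarrow> nat \<Rightarrow> nat \<Rightarrow> (nat \<Rightarrow> 'a::field) \<Rightarrow> (nat \<Rightarrow> 'a) set" where
  "gabidulin q n k g = {(\<lambda>i. if i < n then poly p (g i) else 0) | p.
        linearized q p \<and> degree p < q ^ k}"

definition Fq_span :: "nat \<Rightarrow> nat \<Rightarrow> (nat \<Rightarrow> 'a::field) \<Rightarrow> 'a set" where
  "Fq_span q n g = {(\<Sum>i<n. c i * g i) | c. \<forall>i<n. c i \<in> Fq q}"

definition Pi_poly :: "nat \<Rightarrow> nat \<Rightarrow> (nat \<Rightarrow> 'a::field) \<Rightarrow> 'a poly" where
  "Pi_poly q n g = (\<Prod>u\<in>Fq_span q n g. [:-u, 1:])"

(* Moore matrix M_n(v_1..v_n), 0-based: entry (j,l) = v_l^(q^j) *)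
definition moore :: "nat \<Rightarrow> nat \<Rightarrow> (nat \<Rightarrow> 'a::field) \<Rightarrow> 'a mat" where
  "moore q n v = mat n n (\<lambda>(j, l). v l ^ (q ^ j))"

(* D_i(g,x): M_n(g_1,..,g_n,x) without column i (0-based i < n), entries in 'a poly *)
definition Dmat :: "nat \<Rightarrow> nat \<Rightarrow> (nat \<Rightarrow> 'a::field) \<Rightarrow> nat \<Rightarrow> 'a poly mat" where
  "Dmat q n g i = mat n n (\<lambda>(j, c).
      if c = n - 1 then monom 1 (q ^ j)
      else if c < i then [: g c ^ (q ^ j) :]
      else [: g (c + 1) ^ (q ^ j) :])"

definition Lambda_poly :: "nat \<Rightarrow> nat \<Rightarrow> (nat \<Rightarrow> 'a::field) \<Rightarrow> (nat \<Rightarrow> 'a) \<Rightarrow> 'a poly" where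
  "Lambda_poly q n g r =
     smult (inverse (det (moore q n g)))
       (\<Sum>i<n. smult ((-1) ^ (n - 1 - i) * r i) (det (Dmat q n g i)))"

(* elements of L_q(x,q^m)^2 as pairs; left composition h o [f1 f2] *)
definition lcomp :: "'a::field poly \<Rightarrow> 'a poly \<times> 'a poly \<Rightarrow> 'a poly \<times> 'a poly" where
  "lcomp h f = (pcompose h (fst f), pcompose h (snd f))"

definition vadd :: "'a::field poly \<times> 'a poly \<Rightarrow> 'a poly \<times> 'a poly \<Rightarrow> 'a poly \<times> 'a poly" where
  "vadd f h = (fst f + fst h, snd f + snd h)"

definition vsum_list :: "('a::field poly \<times> 'a poly) list \<Rightarrow> 'a poly \<times> 'a poly" where
  "vsum_list xs = foldr vadd xs (0, 0)"

definition interp_module :: "nat \<Rightarrow> nat \<Rightarrow> (nat \<Rightarrow> 'a::field) \<Rightarrow> (nat \<Rightarrow> 'a) \<Rightarrow> ('a poly \<times> 'a poly) set" where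
  "interp_module q n g r = {vadd (lcomp \<beta> (Pi_poly q n g, 0)) (lcomp \<gamma> (- Lambda_poly q n g r, [:0, 1:])) | \<beta> \<gamma>.
      linearized q \<beta> \<and> linearized q \<gamma>}"

(* monomials x^[i] e_j encoded as (i, j), j \<in> {1,2}; (0,k-1)-weighted TOP order *)
definition wt :: "nat \<Rightarrow> nat \<Rightarrow> nat" where
  "wt k j = (if j = 1 then 0 else k - 1)"

definition mon_less :: "nat \<Rightarrow> nat \<times> nat \<Rightarrow> nat \<times> nat \<Rightarrow> bool" where
  "mon_less k m1 m2 \<longleftrightarrow>
     fst m1 + wt k (snd m1) < fst m2 + wt k (snd m2) \<or>
     (fst m1 + wt k (snd m1) = fst m2 + wt k (snd m2) \<and> snd m1 < snd m2)"

definition comp_of :: "'a poly \<times> 'a poly \<Rightarrow> nat \<Rightarrow> 'a poly" where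
  "comp_of f j = (if j = 1 then fst f else snd f)"

definition supp :: "nat \<Rightarrow> 'a::field poly \<times> 'a poly \<Rightarrow> (nat \<times> nat) set" where
  "supp q f = {(i, j). j \<in> {1, 2} \<and> coeff (comp_of f j) (q ^ i) \<noteq> 0}"

definition lm_idx :: "nat \<Rightarrow> nat \<Rightarrow> 'a::field poly \<times> 'a poly \<Rightarrow> nat \<times> nat" where
  "lm_idx q k f = (THE m. m \<in> supp q f \<and> (\<forall>m'\<in>supp q f. m' \<noteq> m \<longrightarrow> mon_less k m' m))"

definition lpos :: "nat \<Rightarrow> nat \<Rightarrow> 'a::field poly \<times> 'a poly \<Rightarrow> nat" where
  "lpos q k f = snd (lm_idx q k f)"

definition mon_vec :: "nat \<Rightarrow> 'a::field \<Rightarrow> nat \<times> nat \<Rightarrow> 'a poly \<times> 'a poly" where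
  "mon_vec q c m = (if snd m = 1 then (monom c (q ^ fst m), 0) else (0, monom c (q ^ fst m)))"

definition lm :: "nat \<Rightarrow> nat \<Rightarrow> 'a::field poly \<times> 'a poly \<Rightarrow> 'a poly \<times> 'a poly" where
  "lm q k f = mon_vec q 1 (lm_idx q k f)"

definition lt :: "nat \<Rightarrow> nat \<Rightarrow> 'a::field poly \<times> 'a poly \<Rightarrow> 'a poly \<times> 'a poly" where
  "lt q k f = mon_vec q (coeff (comp_of f (snd (lm_idx q k f))) (q ^ fst (lm_idx q k f))) (lm_idx q k f)"

(* weighted q-degree: max{qdeg f1, qdeg f2 + k - 1}, ignoring zero components (qdeg 0 = -infinity) *)
definition wqdeg :: "nat \<Rightarrow> nat \<Rightarrow> 'a::field poly \<times> 'a poly \<Rightarrow> nat" where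
  "wqdeg q k f = Max ((if fst f \<noteq> 0 then {qdeg q (fst f)} else {}) \<union>
                     (if snd f \<noteq> 0 then {qdeg q (snd f) + (k - 1)} else {}))"

(* f can be reduced modulo F in one step: there are f^(i) \<in> F, b_i, a_i with
   lm f = x^[a_i] o lm f^(i) and lt f = \<Sum> (b_i x^[a_i]) o lt f^(i)
   (the reduced element h is then determined). *)
definition reducible :: "nat \<Rightarrow> nat \<Rightarrow> 'a::field poly \<times> 'a poly \<Rightarrow> ('a poly \<times> 'a poly) set \<Rightarrow> bool" where
  "reducible q k f F \<longleftrightarrow>
     (\<exists>L :: (('a poly \<times> 'a poly) \<times> 'a \<times> nat) list.
        (\<forall>(fi, b, a) \<in> set L. fi \<in> F \<and> lm q k f = lcomp (xq q a) (lm q k fi)) \<and>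
        lt q k f = vsum_list (map (\<lambda>(fi, b, a). lcomp (smult b (xq q a)) (lt q k fi)) L))"

definition is_basis2 :: "nat \<Rightarrow> ('a::field poly \<times> 'a poly) set \<Rightarrow> 'a poly \<times> 'a poly \<Rightarrow> 'a poly \<times> 'a poly \<Rightarrow> bool" where
  "is_basis2 q M b1 b2 \<longleftrightarrow>
     M = {vadd (lcomp a1 b1) (lcomp a2 b2) | a1 a2. linearized q a1 \<and> linearized q a2} \<and>
     (\<forall>a1 a2. linearized q a1 \<and> linearized q a2 \<and> vadd (lcomp a1 b1) (lcomp a2 b2) = (0, 0)
         \<longrightarrow> a1 = 0 \<and> a2 = 0)"

definition minimal_basis2 :: "nat \<Rightarrow> nat \<Rightarrow> ('a::field poly \<times> 'a poly) set \<Rightarrow> 'a poly \<times> 'a poly \<Rightarrow> 'a poly \<times> 'a poly \<Rightarrow> bool" where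
  "minimal_basis2 q k M b1 b2 \<longleftrightarrow>
     is_basis2 q M b1 b2 \<and>
     (\<forall>b\<in>{b1, b2}. \<not> reducible q k b ({b1, b2} - {b}))"

end

theory Submission imports Defs "HOL-Number_Theory.Residues" "HOL-Library.FuncSet" begin


hide_const (open) UnivPoly.monom UnivPoly.coeff UnivPoly.deg

section \<open>Characteristic and Frobenius\<close>

lemma fin_field_power_card:
  fixes x :: "'a :: {field, finite}"
  shows "x ^ card (UNIV :: 'a set) = x"
proof (cases "x = 0")
  case False
  have "x * (\<Prod>y\<in>UNIV-{0}. x * y) = x * x ^ (card (UNIV :: 'a set) - 1) * \<Prod>(UNIV-{0})"
    by (simp add: prod.distrib mult_ac)
  also have "x * x ^ (card (UNIV :: 'a set) - 1) = x ^ Suc (card (UNIV :: 'a set) - 1)"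
    by (subst power_Suc) auto
  also have "Suc (card (UNIV :: 'a set) - 1) = card (UNIV :: 'a set)"
    using finite_UNIV_card_ge_0[where ?'a = 'a] by simp
  also have "(\<Prod>y\<in>UNIV-{0}. x * y) = (\<Prod>y\<in>UNIV-{0}. y)"
    by (rule prod.reindex_bij_witness[of _ "\<lambda>y. y / x" "\<lambda>y. x * y"]) (use False in auto)
  finally show ?thesis
    by simp
qed (use finite_UNIV_card_ge_0[where ?'a = 'a] in auto)

lemma char_setup:
  fixes p e m :: nat
  assumes "prime p" "card (UNIV :: 'a :: {field, finite} set) = p ^ (e * m)" "e * m \<ge> 1"
  shows "CHAR('a) = p"
proof -
  have fin: "finite (UNIV :: 'a set)" by simp
  have pos: "CHAR('a) > 0" using finite_imp_CHAR_pos[OF fin] by simp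
  have pr: "prime CHAR('a)" using prime_CHAR_semidom[OF pos] .
  have "CHAR('a) dvd p ^ (e * m)" using CHAR_dvd_CARD[where 'a='a] assms(2) by simp
  hence "CHAR('a) dvd p" using prime_dvd_power[OF pr] by blast
  thus ?thesis using pr assms(1) primes_dvd_imp_eq by blast
qed

definition qchar :: "nat \<Rightarrow> 'a::comm_semiring_1 itself \<Rightarrow> bool" where
  "qchar q T \<longleftrightarrow> prime CHAR('a) \<and> (\<exists>e\<ge>1. q = CHAR('a) ^ e)"

lemma qchar_poly: "qchar q TYPE('a::comm_semiring_1) \<Longrightarrow> qchar q TYPE('a poly)"
  unfolding qchar_def by simp

lemma qchar_ge2: "qchar q TYPE('a::comm_semiring_1) \<Longrightarrow> q \<ge> 2"
proof -
  assume "qchar q TYPE('a)"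
  then obtain e where "prime CHAR('a)" "e \<ge> 1" "q = CHAR('a) ^ e" unfolding qchar_def by auto
  moreover have "CHAR('a) \<ge> 2" using \<open>prime CHAR('a)\<close> prime_ge_2_nat by blast
  ultimately have "CHAR('a) ^ 1 \<le> q" by (simp add: self_le_power)
  thus "q \<ge> 2" using \<open>CHAR('a) \<ge> 2\<close> by simp
qed

lemma frob_add:
  fixes x y :: "'a::comm_semiring_1"
  assumes "qchar q TYPE('a)"
  shows "(x + y) ^ (q ^ i) = x ^ (q ^ i) + y ^ (q ^ i)"
proof -
  obtain e where pr: "prime CHAR('a)" and q: "q = CHAR('a) ^ e" using assms unfolding qchar_def by auto
  have "q ^ i = CHAR('a) ^ (e * i)" using q by (simp add: power_mult)
  thus ?thesis using freshmans_dream'[OF pr] by metis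
qed

lemma frob_sum:
  fixes f :: "'b \<Rightarrow> 'a::comm_semiring_1"
  assumes "qchar q TYPE('a)"
  shows "(sum f A) ^ (q ^ i) = (\<Sum>x\<in>A. f x ^ (q ^ i))"
proof -
  obtain e where pr: "prime CHAR('a)" and q: "q = CHAR('a) ^ e" using assms unfolding qchar_def by auto
  have "q ^ i = CHAR('a) ^ (e * i)" using q by (simp add: power_mult)
  thus ?thesis using freshmans_dream_sum'[OF pr] by metis
qed

lemma frob_neg:
  fixes x :: "'a::comm_ring_1"
  assumes "qchar q TYPE('a)"
  shows "(- x) ^ (q ^ i) = - (x ^ (q ^ i))"
proof -
  have "0 = (x + - x) ^ (q ^ i)" using qchar_ge2[OF assms] by (simp add: power_0_left)
  also have "\<dots> = x ^ (q ^ i) + (- x) ^ (q ^ i)" by (rule frob_add[OF assms])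
  finally show ?thesis by (simp add: eq_neg_iff_add_eq_0 add.commute)
qed

lemma frob_diff:
  fixes x y :: "'a::comm_ring_1"
  assumes "qchar q TYPE('a)"
  shows "(x - y) ^ (q ^ i) = x ^ (q ^ i) - y ^ (q ^ i)"
  using frob_add[OF assms, of x "-y" i] frob_neg[OF assms, of y i] by simp

section \<open>The subfield Fq\<close>

lemma Fq_0: "q > 0 \<Longrightarrow> 0 \<in> Fq q" and Fq_1: "1 \<in> Fq q"
  unfolding Fq_def by auto

lemma Fq_pow: "c \<in> Fq q \<Longrightarrow> c ^ (q ^ i) = c"
  unfolding Fq_def
proof (induction i)
  case (Suc i)
  have "c ^ (q ^ Suc i) = (c ^ (q ^ i)) ^ q" by (simp add: power_mult[symmetric] mult.commute)
  thus ?case using Suc by simp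
qed simp

lemma Fq_add: "qchar q TYPE('a::field) \<Longrightarrow> a \<in> Fq q \<Longrightarrow> b \<in> Fq q \<Longrightarrow> (a::'a) + b \<in> Fq q"
  unfolding Fq_def using frob_add[of q a b 1] by simp

lemma Fq_neg: "qchar q TYPE('a::field) \<Longrightarrow> a \<in> Fq q \<Longrightarrow> - (a::'a) \<in> Fq q"
  unfolding Fq_def using frob_neg[of q a 1] by simp

lemma Fq_diff: "qchar q TYPE('a::field) \<Longrightarrow> a \<in> Fq q \<Longrightarrow> b \<in> Fq q \<Longrightarrow> (a::'a) - b \<in> Fq q"
  using Fq_add[of q a "-b"] Fq_neg[of q b] by simp

lemma Fq_mult: "a \<in> Fq q \<Longrightarrow> b \<in> Fq q \<Longrightarrow> (a::'a::field) * b \<in> Fq q"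
  unfolding Fq_def by (simp add: power_mult_distrib)

lemma Fq_divide: "a \<in> Fq q \<Longrightarrow> b \<in> Fq q \<Longrightarrow> (a::'a::field) / b \<in> Fq q"
  unfolding Fq_def by (simp add: power_divide)

lemma Fq_sum: "qchar q TYPE('a::field) \<Longrightarrow> (\<And>i. i \<in> A \<Longrightarrow> f i \<in> Fq q) \<Longrightarrow> (\<Sum>i\<in>A. f i :: 'a) \<in> Fq q"
  unfolding Fq_def using frob_sum[of q f A 1] by simp

lemma card_Fq_le: "qchar q TYPE('a::{field}) \<Longrightarrow> finite (Fq q :: 'a set) \<and> card (Fq q :: 'a set) \<le> q"
proof -
  assume qc: "qchar q TYPE('a)"
  have q2: "q \<ge> 2" using qchar_ge2[OF qc] .
  define D :: "'a poly" where "D = monom 1 q - monom 1 1"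
  have cD: "coeff D q = 1" using q2 unfolding D_def by simp
  have D0: "D \<noteq> 0" using cD by auto
  have dD: "degree D = q"
  proof (rule antisym)
    show "degree D \<le> q" unfolding D_def using q2
      by (intro degree_diff_le) (auto simp: degree_monom_le intro: order.trans[OF degree_monom_le])
    show "q \<le> degree D" using cD by (simp add: le_degree)
  qed
  have eq: "Fq q = {x. poly D x = 0}" unfolding Fq_def D_def by (auto simp: poly_monom)
  show ?thesis using card_poly_roots_bound[OF D0] poly_roots_finite[OF D0] dD eq by simp
qed




lemma monom_pow_q: "(monom (1::'a::comm_semiring_1) (q ^ j)) ^ q = monom 1 (q ^ Suc j)"
  by (simp add: monom_power mult.commute)

lemma card_Fq_ge:
  assumes qc: "qchar q TYPE('a::{field,finite})" and m: "m \<ge> 1" and card: "card (UNIV :: 'a set) = q ^ m"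
  shows "card (Fq q :: 'a set) \<ge> q"
proof -
  have q2: "q \<ge> 2" using qchar_ge2[OF qc] .
  define D :: "'a poly" where "D = monom 1 q - monom 1 1"
  define B :: "'a poly" where "B = monom 1 (q ^ m) - monom 1 1"
  have cD: "coeff D q = 1" using q2 unfolding D_def by simp
  have D0: "D \<noteq> 0" using cD by auto
  have dD: "degree D = q"
  proof (rule antisym)
    show "degree D \<le> q" unfolding D_def using q2
      by (intro degree_diff_le) (auto simp: degree_monom_le intro: order.trans[OF degree_monom_le])
    show "q \<le> degree D" using cD by (simp add: le_degree)
  qed
  have "q \<le> q ^ m" using q2 m by (intro self_le_power) auto
  hence qm1: "q ^ m \<noteq> 1" using q2 by linarith
  have h1: "(1::nat) \<noteq> q ^ m" using qm1 by metis
  have cB: "coeff B (q ^ m) = 1" unfolding B_def coeff_diff coeff_monom by (simp only: h1 if_False if_True diff_zero refl)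
  have B0: "B \<noteq> 0" using cB by auto
  have dB: "degree B = q ^ m"
  proof (rule antisym)
    show "degree B \<le> q ^ m" unfolding B_def using q2 m
      by (intro degree_diff_le) (auto simp: degree_monom_le intro: order.trans[OF degree_monom_le])
    show "q ^ m \<le> degree B" using cB by (simp add: le_degree)
  qed
  have step: "monom 1 (q ^ Suc j) - monom 1 (q ^ j) = D ^ (q ^ j)" for j
  proof -
    have "monom (1::'a) (q ^ Suc j) = (monom 1 q) ^ (q ^ j)"
      by (simp add: monom_power mult.commute)
    also have "monom (1::'a) q = D + monom 1 (q ^ 0)" unfolding D_def by simp
    also have "(D + monom 1 (q ^ 0)) ^ (q ^ j) = D ^ (q ^ j) + (monom 1 (q ^ 0)) ^ (q ^ j)"
      by (rule frob_add[OF qchar_poly[OF qc]])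
    also have "(monom (1::'a) (q ^ 0)) ^ (q ^ j) = monom 1 (q ^ j)" by (simp add: monom_power)
    finally show ?thesis by simp
  qed
  have "B = (\<Sum>j<m. monom 1 (q ^ Suc j) - monom 1 (q ^ j))"
    unfolding B_def by (subst sum_lessThan_telescope) simp
  also have "\<dots> = (\<Sum>j<m. D ^ (q ^ j))" using step by simp
  finally have "D dvd B" using q2 by (auto intro!: dvd_sum dvd_power)
  then obtain E where BE: "B = D * E" by (auto elim: dvdE)
  have E0: "E \<noteq> 0" using B0 BE by auto
  have dE: "degree B = degree D + degree E" using BE D0 E0 by (simp add: degree_mult_eq)
  have allroot: "poly B x = 0" for x
    using fin_field_power_card[of x] card unfolding B_def by (simp add: poly_monom)
  have "UNIV = {x. poly D x = 0} \<union> {x. poly E x = 0}"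
    using allroot BE by auto
  hence "q ^ m \<le> card {x. poly D x = 0} + card {x. poly E x = 0}"
    using card card_Un_le by metis
  also have "\<dots> \<le> card {x. poly D x = 0} + degree E"
    using card_poly_roots_bound[OF E0] by simp
  finally have "q \<le> card {x. poly D x = 0}" using dE dB dD by simp
  moreover have "Fq q = {x. poly D x = 0}" unfolding Fq_def D_def by (auto simp: poly_monom)
  ultimately show ?thesis by simp
qed

lemma card_Fq:
  assumes qc: "qchar q TYPE('a::{field,finite})" and m: "m \<ge> 1" and card: "card (UNIV :: 'a set) = q ^ m"
  shows "card (Fq q :: 'a set) = q"
  using card_Fq_ge[OF assms] card_Fq_le[OF qc] by simp




section \<open>Linearized polynomials\<close>

lemma lin_sum_coeff:
  assumes "finite A" "q \<ge> 2"
  shows "coeff (\<Sum>i\<in>A. monom (c i) (q ^ i)) j = (if \<exists>i\<in>A. q ^ i = j then c (THE i. q ^ i = j) else 0)"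
proof (cases "\<exists>i\<in>A. q ^ i = j")
  case True
  then obtain i0 where i0: "i0 \<in> A" "q ^ i0 = j" by auto
  have eq: "q ^ i = j \<longleftrightarrow> i = i0" for i using i0 assms(2) by auto
  have th: "(THE i. q ^ i = j) = i0" using eq by auto
  have "coeff (\<Sum>i\<in>A. monom (c i) (q ^ i)) j = (\<Sum>i\<in>A. if i = i0 then c i else 0)"
    by (simp add: coeff_sum eq)
  also have "\<dots> = c i0" using i0 assms by (simp add: sum.delta')
  finally show ?thesis using True th by simp
next
  case False
  thus ?thesis by (auto simp: coeff_sum intro!: sum.neutral)
qed

lemma lin_sum: 
  assumes "finite A" "q \<ge> 2" shows "linearized q (\<Sum>i\<in>A. monom (c i) (q ^ i))"
  unfolding linearized_def
proof (intro allI impI)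
  fix j assume "coeff (\<Sum>i\<in>A. monom (c i) (q ^ i)) j \<noteq> 0"
  thus "\<exists>i. j = q ^ i" unfolding lin_sum_coeff[OF assms] by (auto split: if_splits)
qed

lemma lin_0[simp]: "linearized q 0" unfolding linearized_def by simp

lemma lin_monom: "linearized q (monom c (q ^ i))" unfolding linearized_def by auto

lemma lin_add: "linearized q f \<Longrightarrow> linearized q g \<Longrightarrow> linearized q (f + g)"
  unfolding linearized_def coeff_add by force

lemma lin_uminus: "linearized q f \<Longrightarrow> linearized q (- f)"
  unfolding linearized_def by simp

lemma lin_diff: "linearized q f \<Longrightarrow> linearized q g \<Longrightarrow> linearized q (f - g)"
  using lin_add[of q f "-g"] lin_uminus[of q g] by simp

lemma lin_smult: "linearized q f \<Longrightarrow> linearized q (smult a f)"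
  unfolding linearized_def by simp

lemma lin_sum_gen: "finite A \<Longrightarrow> (\<And>i. i \<in> A \<Longrightarrow> linearized q (f i)) \<Longrightarrow> linearized q (\<Sum>i\<in>A. f i)"
  by (induction A rule: finite_induct) (auto intro: lin_add)

lemma lin_x: "linearized q [:0, 1:]"
  using lin_monom[of q 1 0] by (simp add: monom_altdef)

lemma lin_coeff0: "q > 0 \<Longrightarrow> linearized q p \<Longrightarrow> coeff p 0 = 0"
  unfolding linearized_def by (metis power_not_zero less_not_refl2)

lemma lin_poly0: "q > 0 \<Longrightarrow> linearized q p \<Longrightarrow> poly p 0 = 0"
  by (simp add: lin_coeff0 poly_0_coeff_0)

lemma lin_repr:
  assumes "q \<ge> 2" "linearized q p"
  shows "p = (\<Sum>i\<le>degree p. monom (coeff p (q ^ i)) (q ^ i))"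
proof (rule poly_eqI)
  fix j
  show "coeff p j = coeff (\<Sum>i\<le>degree p. monom (coeff p (q ^ i)) (q ^ i)) j"
  proof (cases "coeff p j = 0")
    case True
    have "(\<Sum>i\<le>degree p. if q ^ i = j then coeff p (q ^ i) else 0) = 0"
      using True by (intro sum.neutral) auto
    thus ?thesis using True by (simp add: coeff_sum)
  next
    case False
    then obtain i0 where i0: "j = q ^ i0" using assms(2) unfolding linearized_def by auto
    have "(2::nat) ^ i0 \<le> q ^ i0" using assms(1) by (rule power_mono) simp
    hence "i0 < q ^ i0" using less_exp[of i0] by linarith
    also have "q ^ i0 \<le> degree p" using False i0 le_degree by blast
    finally have "i0 \<in> {..degree p}" by simp
    thus ?thesis using lin_sum_coeff[of "{..degree p}" q "\<lambda>i. coeff p (q ^ i)" j] assms(1) i0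
      by auto
  qed
qed

lemma pcompose_monom: "pcompose (monom c n) f = smult c (f ^ n)"
proof -
  have X: "pcompose [:0, 1:] f = f" by (simp add: pcompose_pCons)
  have "pcompose ([:0, 1:] ^ n) f = f ^ n"
    by (induction n) (simp_all only: power_Suc pcompose_mult pcompose_1 X power_0)
  thus ?thesis by (simp add: monom_altdef pcompose_smult)
qed

lemma lin_pcompose_repr:
  assumes "q \<ge> 2" "linearized q p"
  shows "pcompose p f = (\<Sum>i\<le>degree p. smult (coeff p (q ^ i)) (f ^ (q ^ i)))"
  by (subst lin_repr[OF assms]) (simp add: pcompose_sum pcompose_monom)

lemma lin_power:
  assumes qc: "qchar q TYPE('a::field)" and f: "linearized q (f :: 'a poly)"
  shows "f ^ (q ^ i) = (\<Sum>j\<le>degree f. monom (coeff f (q ^ j) ^ (q ^ i)) (q ^ (j + i)))"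
proof -
  have q2: "q \<ge> 2" using qchar_ge2[OF qc] .
  have "f ^ (q ^ i) = (\<Sum>j\<le>degree f. monom (coeff f (q ^ j)) (q ^ j)) ^ (q ^ i)"
    using lin_repr[OF q2 f] by simp
  also have "\<dots> = (\<Sum>j\<le>degree f. (monom (coeff f (q ^ j)) (q ^ j)) ^ (q ^ i))"
    by (rule frob_sum[OF qchar_poly[OF qc]])
  also have "\<dots> = (\<Sum>j\<le>degree f. monom (coeff f (q ^ j) ^ (q ^ i)) (q ^ (j + i)))"
    by (simp add: monom_power power_add)
  finally show ?thesis .
qed

lemma lin_power_lin:
  assumes qc: "qchar q TYPE('a::field)" and f: "linearized q (f :: 'a poly)"
  shows "linearized q (f ^ (q ^ i))"
proof -
  have "linearized q (\<Sum>j\<le>degree f. monom (coeff f (q ^ j) ^ (q ^ i)) (q ^ (j + i)))"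
    by (intro lin_sum_gen) (auto intro: lin_monom)
  thus ?thesis using lin_power[OF assms] by simp
qed

lemma lin_pcompose:
  assumes qc: "qchar q TYPE('a::field)" and p: "linearized q p" and f: "linearized q (f :: 'a poly)"
  shows "linearized q (pcompose p f)"
  unfolding lin_pcompose_repr[OF qchar_ge2[OF qc] p, of f]
  by (intro lin_sum_gen lin_smult lin_power_lin[OF qc f]) auto

lemma lin_pcompose_add:
  assumes qc: "qchar q TYPE('a::field)" and p: "linearized q p"
  shows "pcompose p (f + g :: 'a poly) = pcompose p f + pcompose p g"
  using qchar_ge2[OF qc]
  by (simp add: lin_pcompose_repr[OF _ p] frob_add[OF qchar_poly[OF qc]] smult_add_right sum.distrib)

lemma lin_pcompose_uminus:
  assumes qc: "qchar q TYPE('a::field)" and p: "linearized q p"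
  shows "pcompose p (- f :: 'a poly) = - pcompose p f"
  using qchar_ge2[OF qc]
  by (simp add: lin_pcompose_repr[OF _ p] frob_neg[OF qchar_poly[OF qc]] sum_negf)

lemma lin_pcompose_diff:
  assumes qc: "qchar q TYPE('a::field)" and p: "linearized q p"
  shows "pcompose p (f - g :: 'a poly) = pcompose p f - pcompose p g"
  using lin_pcompose_add[OF qc p, of f "-g"] lin_pcompose_uminus[OF qc p, of g] by simp

lemma lin_poly_repr:
  assumes "q \<ge> 2" "linearized q p"
  shows "poly p x = (\<Sum>i\<le>degree p. coeff p (q ^ i) * x ^ (q ^ i))"
  by (subst lin_repr[OF assms]) (simp add: poly_sum poly_monom)

lemma lin_poly_add:
  assumes qc: "qchar q TYPE('a::field)" and p: "linearized q p"
  shows "poly p (a + b :: 'a) = poly p a + poly p b"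
  using qchar_ge2[OF qc]
  by (simp add: lin_poly_repr[OF _ p] frob_add[OF qc] distrib_left sum.distrib)

lemma lin_poly_neg:
  assumes qc: "qchar q TYPE('a::field)" and p: "linearized q p"
  shows "poly p (- a :: 'a) = - poly p a"
  using qchar_ge2[OF qc]
  by (simp add: lin_poly_repr[OF _ p] frob_neg[OF qc] sum_negf)

lemma lin_poly_diff:
  assumes qc: "qchar q TYPE('a::field)" and p: "linearized q p"
  shows "poly p (a - b :: 'a) = poly p a - poly p b"
  using lin_poly_add[OF qc p, of a "-b"] lin_poly_neg[OF qc p, of b] by simp

lemma lin_poly_Fq:
  assumes qc: "qchar q TYPE('a::field)" and p: "linearized q p" and c: "c \<in> Fq q"
  shows "poly p (c * a :: 'a) = c * poly p a"
  using qchar_ge2[OF qc]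
  by (simp add: lin_poly_repr[OF _ p] power_mult_distrib Fq_pow[OF c] sum_distrib_left mult_ac)

lemma lin_poly_lincomb:
  assumes qc: "qchar q TYPE('a::field)" and p: "linearized q p"
  shows "finite A \<Longrightarrow> (\<And>i. i \<in> A \<Longrightarrow> c i \<in> Fq q) \<Longrightarrow>
     poly p (\<Sum>i\<in>A. c i * x i :: 'a) = (\<Sum>i\<in>A. c i * poly p (x i))"
proof (induction A rule: finite_induct)
  case empty
  thus ?case using lin_poly0[OF _ p] qchar_ge2[OF qc] by simp
next
  case (insert a A)
  thus ?case by (simp add: lin_poly_add[OF qc p] lin_poly_Fq[OF qc p])
qed

lemma lin_degree:
  assumes "q \<ge> 2" "linearized q p" "p \<noteq> 0"
  shows "degree p = q ^ qdeg q p"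
proof -
  have c: "coeff p (degree p) \<noteq> 0" using assms(3) by simp
  have "\<exists>i. degree p = q ^ i" using assms(2) c unfolding linearized_def by blast
  then obtain i where i: "degree p = q ^ i" by blast
  have "qdeg q p = i" unfolding qdeg_def
    by (rule the_equality) (use i assms(1) in auto)
  thus ?thesis using i by simp
qed

lemma qdeg_eq: "q \<ge> 2 \<Longrightarrow> degree p = q ^ d \<Longrightarrow> qdeg q p = d"
  unfolding qdeg_def by (rule the_equality) auto




section \<open>Leading monomials\<close>

lemma lin_coeff_le:
  assumes "q \<ge> 2" "linearized q p" "coeff p (q ^ i) \<noteq> 0"
  shows "i \<le> qdeg q p"
proof -
  have p0: "p \<noteq> 0" using assms(3) by auto
  have "q ^ i \<le> degree p" using assms(3) le_degree by blast
  hence "q ^ i \<le> q ^ qdeg q p" using lin_degree[OF assms(1,2) p0] by simp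
  thus ?thesis using assms(1) by simp
qed

lemma lin_coeff_top:
  assumes "q \<ge> 2" "linearized q p" "p \<noteq> 0"
  shows "coeff p (q ^ qdeg q p) \<noteq> 0"
  using lin_degree[OF assms] assms(3) by (metis leading_coeff_0_iff)

lemma mon_less_asym: "mon_less k a b \<Longrightarrow> \<not> mon_less k b a"
  unfolding mon_less_def by auto

lemma lm_idx_pos1:
  assumes q2: "q \<ge> 2" and l1: "linearized q f1" and l2: "linearized q f2"
    and f1: "f1 \<noteq> 0" and c: "f2 = 0 \<or> qdeg q f2 + (k - 1) < qdeg q f1"
  shows "lm_idx q k (f1, f2) = (qdeg q f1, 1)"
proof -
  let ?m = "(qdeg q f1, 1::nat)"
  have mem: "?m \<in> supp q (f1, f2)"
    unfolding supp_def comp_of_def using lin_coeff_top[OF q2 l1 f1] by auto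
  have less: "mon_less k m' ?m" if "m' \<in> supp q (f1, f2)" "m' \<noteq> ?m" for m'
  proof -
    obtain i j where m': "m' = (i, j)" by fastforce
    show ?thesis
    proof (cases "j = 1")
      case True
      hence ci: "coeff f1 (q ^ i) \<noteq> 0" using that m' unfolding supp_def comp_of_def by auto
      have "i \<le> qdeg q f1" by (rule lin_coeff_le[OF q2 l1 ci])
      hence "i < qdeg q f1" using that m' True by auto
      thus ?thesis using m' True unfolding mon_less_def wt_def by auto
    next
      case False
      hence j: "j = 2" and ci: "coeff f2 (q ^ i) \<noteq> 0" using that m' unfolding supp_def comp_of_def by auto
      have "i \<le> qdeg q f2" by (rule lin_coeff_le[OF q2 l2 ci])
      moreover have "f2 \<noteq> 0" using ci by auto
      ultimately have "i + (k - 1) < qdeg q f1" using c by auto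
      thus ?thesis using m' j unfolding mon_less_def wt_def by auto
    qed
  qed
  show ?thesis unfolding lm_idx_def
  proof (rule the_equality)
    show "?m \<in> supp q (f1, f2) \<and> (\<forall>m'\<in>supp q (f1, f2). m' \<noteq> ?m \<longrightarrow> mon_less k m' ?m)"
      using mem less by auto
  next
    fix m assume "m \<in> supp q (f1, f2) \<and> (\<forall>m'\<in>supp q (f1, f2). m' \<noteq> m \<longrightarrow> mon_less k m' m)"
    thus "m = ?m" using mem less mon_less_asym by metis
  qed
qed

lemma lm_idx_pos2:
  assumes q2: "q \<ge> 2" and l1: "linearized q f1" and l2: "linearized q f2"
    and f2: "f2 \<noteq> 0" and c: "f1 = 0 \<or> qdeg q f1 \<le> qdeg q f2 + (k - 1)"
  shows "lm_idx q k (f1, f2) = (qdeg q f2, 2)"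
proof -
  let ?m = "(qdeg q f2, 2::nat)"
  have mem: "?m \<in> supp q (f1, f2)"
    unfolding supp_def comp_of_def using lin_coeff_top[OF q2 l2 f2] by auto
  have less: "mon_less k m' ?m" if "m' \<in> supp q (f1, f2)" "m' \<noteq> ?m" for m'
  proof -
    obtain i j where m': "m' = (i, j)" by fastforce
    show ?thesis
    proof (cases "j = 1")
      case True
      hence ci: "coeff f1 (q ^ i) \<noteq> 0" using that m' unfolding supp_def comp_of_def by auto
      have "i \<le> qdeg q f1" by (rule lin_coeff_le[OF q2 l1 ci])
      moreover have "f1 \<noteq> 0" using ci by auto
      ultimately have "i \<le> qdeg q f2 + (k - 1)" using c by auto
      thus ?thesis using m' True unfolding mon_less_def wt_def by auto
    next
      case False
      hence j: "j = 2" and ci: "coeff f2 (q ^ i) \<noteq> 0" using that m' unfolding supp_def comp_of_def by auto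
      have "i \<le> qdeg q f2" by (rule lin_coeff_le[OF q2 l2 ci])
      hence "i < qdeg q f2" using that m' j by auto
      thus ?thesis using m' j unfolding mon_less_def wt_def by auto
    qed
  qed
  show ?thesis unfolding lm_idx_def
  proof (rule the_equality)
    show "?m \<in> supp q (f1, f2) \<and> (\<forall>m'\<in>supp q (f1, f2). m' \<noteq> ?m \<longrightarrow> mon_less k m' ?m)"
      using mem less by auto
  next
    fix m assume "m \<in> supp q (f1, f2) \<and> (\<forall>m'\<in>supp q (f1, f2). m' \<noteq> m \<longrightarrow> mon_less k m' m)"
    thus "m = ?m" using mem less mon_less_asym by metis
  qed
qed

lemma lpos1_cond:
  assumes q2: "q \<ge> 2" and l1: "linearized q f1" and l2: "linearized q f2"
    and nz: "(f1, f2) \<noteq> (0, 0)" and lp: "lpos q k (f1, f2) = 1"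
  shows "f1 \<noteq> 0 \<and> (f2 = 0 \<or> qdeg q f2 + (k - 1) < qdeg q f1)"
proof (rule ccontr)
  assume "\<not> ?thesis"
  hence "f2 \<noteq> 0 \<and> (f1 = 0 \<or> qdeg q f1 \<le> qdeg q f2 + (k - 1))" using nz by auto
  hence "lpos q k (f1, f2) = 2" unfolding lpos_def using lm_idx_pos2[OF q2 l1 l2] by auto
  thus False using lp by simp
qed

lemma lpos2_cond:
  assumes q2: "q \<ge> 2" and l1: "linearized q f1" and l2: "linearized q f2"
    and nz: "(f1, f2) \<noteq> (0, 0)" and lp: "lpos q k (f1, f2) = 2"
  shows "f2 \<noteq> 0 \<and> (f1 = 0 \<or> qdeg q f1 \<le> qdeg q f2 + (k - 1))"
proof (rule ccontr)
  assume "\<not> ?thesis"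
  hence "f1 \<noteq> 0 \<and> (f2 = 0 \<or> qdeg q f2 + (k - 1) < qdeg q f1)" using nz by auto
  hence "lpos q k (f1, f2) = 1" unfolding lpos_def using lm_idx_pos1[OF q2 l1 l2] by auto
  thus False using lp by simp
qed

lemma wqdeg_pos1:
  assumes "f1 \<noteq> 0" "f2 = 0 \<or> qdeg q f2 + (k - 1) < qdeg q f1"
  shows "wqdeg q k (f1, f2) = qdeg q f1"
  using assms unfolding wqdeg_def by (cases "f2 = 0") auto

lemma wqdeg_pos2:
  assumes "f2 \<noteq> 0" "f1 = 0 \<or> qdeg q f1 \<le> qdeg q f2 + (k - 1)"
  shows "wqdeg q k (f1, f2) = qdeg q f2 + (k - 1)"
  using assms unfolding wqdeg_def by (cases "f1 = 0") (auto simp: max_def)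

lemma lin_deg_pos: "q \<ge> 2 \<Longrightarrow> linearized q p \<Longrightarrow> p \<noteq> 0 \<Longrightarrow> degree p \<ge> 1"
  using lin_degree[of q p] by simp

lemma deg_comp_le_iff:
  assumes "q \<ge> 2" "linearized q a" "linearized q b" "a \<noteq> 0" "b \<noteq> 0"
  shows "qdeg q a + d < qdeg q b \<longleftrightarrow> degree a * q ^ d < degree b"
    and "qdeg q a + d \<le> qdeg q b \<longleftrightarrow> degree a * q ^ d \<le> degree b"
  using lin_degree[OF assms(1,2,4)] lin_degree[OF assms(1,3,5)] assms(1)
  by (simp_all add: power_add[symmetric])

lemma pcomp_lin_zero: "q > 0 \<Longrightarrow> linearized q a \<Longrightarrow> pcompose a 0 = 0"
  by (simp add: pcompose_0' lin_coeff0)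

lemma comb_caseA:
  fixes a1 a2 v1 v2 u1 u2 :: "'a::field poly" and K :: nat
  assumes q2: "q \<ge> 2" and lins: "linearized q a1" "linearized q a2" "linearized q v1" "linearized q v2"
       "linearized q u1" "linearized q u2"
    and K: "K \<ge> 1" and v1: "v1 \<noteq> 0" and v2: "v2 = 0 \<or> degree v2 * K < degree v1"
    and u2: "u2 \<noteq> 0" and u1: "degree u1 \<le> degree u2 * K"
    and a2: "a2 \<noteq> 0" and a1: "a1 = 0 \<or> degree a1 * degree v1 \<le> degree a2 * degree u2 * K"
  shows "pcompose a1 v2 + pcompose a2 u2 \<noteq> 0 \<and> degree (pcompose a1 v2 + pcompose a2 u2) = degree a2 * degree u2
    \<and> degree (pcompose a1 v1 + pcompose a2 u1) \<le> degree a2 * degree u2 * K"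
proof -
  have da2: "degree a2 \<ge> 1" using lin_deg_pos[OF q2 lins(2) a2] .
  have du2: "degree u2 \<ge> 1" using lin_deg_pos[OF q2 lins(6) u2] .
  have small: "degree (pcompose a1 v2) < degree (pcompose a2 u2)"
  proof (cases "a1 = 0 \<or> v2 = 0")
    case True
    hence "pcompose a1 v2 = 0" using pcomp_lin_zero[OF _ lins(1)] q2 by auto
    thus ?thesis using da2 du2 by (simp add: degree_pcompose)
  next
    case False
    hence "degree v2 * K < degree v1" "degree a1 * degree v1 \<le> degree a2 * degree u2 * K"
      using v2 a1 by auto
    moreover have "degree a1 \<ge> 1" using lin_deg_pos[OF q2 lins(1)] False by auto
    ultimately have h1: "degree a1 * (degree v2 * K) < degree a1 * degree v1" by simp
    have h2: "degree a1 * degree v1 \<le> degree a2 * degree u2 * K" by fact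
    have "(degree a1 * degree v2) * K < (degree a2 * degree u2) * K"
      using order.strict_trans2[OF h1 h2] by (simp add: mult_ac)
    hence "degree a1 * degree v2 < degree a2 * degree u2" by (simp add: mult_less_cancel2)
    thus ?thesis by (simp add: degree_pcompose)
  qed
  have dz2: "degree (pcompose a1 v2 + pcompose a2 u2) = degree a2 * degree u2"
    using degree_add_eq_right[OF small] by (simp add: degree_pcompose)
  have nz: "pcompose a1 v2 + pcompose a2 u2 \<noteq> 0"
  proof
    assume "pcompose a1 v2 + pcompose a2 u2 = 0"
    hence "degree a2 * degree u2 = 0" using dz2 by simp
    thus False using da2 du2 by simp
  qed
  have t1: "degree (pcompose a1 v1) \<le> degree a2 * degree u2 * K"
    using a1 by (auto simp: degree_pcompose)
  have t2: "degree (pcompose a2 u1) \<le> degree a2 * degree u2 * K"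
    using u1 by (simp add: degree_pcompose mult.assoc)
  have "degree (pcompose a1 v1 + pcompose a2 u1) \<le> degree a2 * degree u2 * K"
    using degree_add_le[OF t1 t2] .
  thus ?thesis using nz dz2 by simp
qed

lemma comb_caseB:
  fixes a1 a2 v1 v2 u1 u2 :: "'a::field poly" and K :: nat
  assumes q2: "q \<ge> 2" and lins: "linearized q a1" "linearized q a2" "linearized q v1" "linearized q v2"
       "linearized q u1" "linearized q u2"
    and K: "K \<ge> 1" and v1: "v1 \<noteq> 0" and v2: "v2 = 0 \<or> degree v2 * K < degree v1"
    and u2: "u2 \<noteq> 0" and u1: "degree u1 \<le> degree u2 * K"
    and a1: "a1 \<noteq> 0" and a2: "a2 = 0 \<or> degree a2 * degree u2 * K < degree a1 * degree v1"
  shows "degree (pcompose a1 v1 + pcompose a2 u1) = degree a1 * degree v1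
    \<and> degree (pcompose a1 v2 + pcompose a2 u2) * K < degree a1 * degree v1"
proof -
  have da1: "degree a1 \<ge> 1" using lin_deg_pos[OF q2 lins(1) a1] .
  have dv1: "degree v1 \<ge> 1" using lin_deg_pos[OF q2 lins(3) v1] .
  have pos: "degree a1 * degree v1 \<ge> 1" using da1 dv1 by simp
  have s1: "degree (pcompose a2 u1) < degree (pcompose a1 v1)"
  proof (cases "a2 = 0")
    case True thus ?thesis using pos by (simp add: degree_pcompose)
  next
    case False
    hence h1: "degree a2 * degree u1 \<le> degree a2 * degree u2 * K" using u1 by (simp add: mult.assoc)
    have h2: "degree a2 * degree u2 * K < degree a1 * degree v1" using a2 False by auto
    have "degree a2 * degree u1 < degree a1 * degree v1" using h1 h2 by linarith
    thus ?thesis by (simp add: degree_pcompose)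
  qed
  have d1: "degree (pcompose a1 v1 + pcompose a2 u1) = degree a1 * degree v1"
    using degree_add_eq_left[OF s1] by (simp add: degree_pcompose)
  have s2: "degree (pcompose a1 v2) * K < degree a1 * degree v1"
  proof (cases "v2 = 0")
    case True
    hence "pcompose a1 v2 = 0" using pcomp_lin_zero[OF _ lins(1)] q2 by auto
    thus ?thesis using pos by simp
  next
    case False
    hence "degree v2 * K < degree v1" using v2 by auto
    hence "degree a1 * (degree v2 * K) < degree a1 * degree v1" using da1 by simp
    thus ?thesis by (simp add: degree_pcompose mult_ac)
  qed
  have s3: "degree (pcompose a2 u2) * K < degree a1 * degree v1"
    using a2 pos by (auto simp: degree_pcompose)
  have "degree (pcompose a1 v2 + pcompose a2 u2) * K \<le> max (degree (pcompose a1 v2)) (degree (pcompose a2 u2)) * K"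
    using degree_add_le_max[of "pcompose a1 v2" "pcompose a2 u2"] by (rule mult_right_mono) simp
  also have "\<dots> < degree a1 * degree v1" using s2 s3 by (simp add: max_def)
  finally show ?thesis using d1 by simp
qed




section \<open>Spans and annihilators\<close>

definition span_on :: "nat \<Rightarrow> nat set \<Rightarrow> (nat \<Rightarrow> 'a::field) \<Rightarrow> 'a set" where
  "span_on q I w = {(\<Sum>i\<in>I. c i * w i) | c. \<forall>i\<in>I. c i \<in> Fq q}"

lemma Fq_span_eq: "Fq_span q n g = span_on q {..<n} g"
  unfolding Fq_span_def span_on_def by auto

lemma lin_kill_span:
  assumes qc: "qchar q TYPE('a::field)" and A: "linearized q A" and fin: "finite I"
    and k: "\<And>i. i \<in> I \<Longrightarrow> poly A (w i) = (0::'a)" and u: "u \<in> span_on q I w"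
  shows "poly A u = 0"
proof -
  obtain c where u: "u = (\<Sum>i\<in>I. c i * w i)" and c: "\<forall>i\<in>I. c i \<in> Fq q"
    using u unfolding span_on_def by auto
  show ?thesis unfolding u using lin_poly_lincomb[OF qc A fin, of c w] c k by simp
qed

lemma card_span_on:
  assumes fin: "finite I" and ind: "Fq_indep q I w" and cq: "card (Fq q :: 'a set) = Q"
    and qc: "qchar q TYPE('a::field)"
  shows "card (span_on q I w :: 'a set) = Q ^ card I"
proof -
  let ?P = "PiE I (\<lambda>_. Fq q :: 'a set)"
  let ?f = "\<lambda>c. (\<Sum>i\<in>I. c i * w i)"
  have img: "span_on q I w = ?f ` ?P"
  proof
    show "span_on q I w \<subseteq> ?f ` ?P"
    proof
      fix u assume "u \<in> span_on q I w"
      then obtain c where u: "u = ?f c" and c: "\<forall>i\<in>I. c i \<in> Fq q" unfolding span_on_def by auto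
      have r: "restrict c I \<in> ?P" using c by auto
      have e: "u = ?f (restrict c I)" using u by simp
      show "u \<in> ?f ` ?P" using r e by blast
    qed
  next
    show "?f ` ?P \<subseteq> span_on q I w" unfolding span_on_def by (auto simp: PiE_def Pi_def)
  qed
  have inj: "inj_on ?f ?P"
  proof (rule inj_onI)
    fix c d assume c: "c \<in> ?P" and d: "d \<in> ?P" and eq: "?f c = ?f d"
    have "(\<Sum>i\<in>I. (c i - d i) * w i) = 0"
      using eq by (simp add: left_diff_distrib sum_subtractf)
    moreover have "\<forall>i\<in>I. c i - d i \<in> Fq q" using c d Fq_diff[OF qc] by (auto simp: PiE_def Pi_def)
    ultimately have "\<forall>i\<in>I. c i - d i = 0"
      using ind[unfolded Fq_indep_def, rule_format, of "\<lambda>i. c i - d i"] by auto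
    thus "c = d" using c d by (auto simp: PiE_def extensional_def intro!: ext)
  qed
  have "card (span_on q I w) = card ?P" unfolding img using card_image[OF inj] .
  also have "\<dots> = Q ^ card I" using fin cq by (simp add: card_PiE)
  finally show ?thesis .
qed

lemma annihilator:
  assumes qc: "qchar q TYPE('a::field)" and fin: "finite I"
  shows "\<exists>A. linearized q A \<and> lead_coeff A = 1 \<and> degree A = q ^ card I \<and> (\<forall>i\<in>I. poly A (w i :: 'a) = 0)"
  using fin
proof (induction I rule: finite_induct)
  case empty
  show ?case by (rule exI[of _ "[:0, 1:]"]) (simp add: lin_x)
next
  case (insert a I)
  have q2: "q \<ge> 2" using qchar_ge2[OF qc] .
  obtain A where A: "linearized q A" "lead_coeff A = 1" "degree A = q ^ card I" "\<forall>i\<in>I. poly A (w i) = 0"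
    using insert.IH by blast
  define \<beta> where "\<beta> = poly A (w a)"
  define P :: "'a poly" where "P = monom 1 (q ^ 1) - monom (\<beta> ^ (q - 1)) (q ^ 0)"
  have linP: "linearized q P" unfolding P_def by (intro lin_diff lin_monom)
  have cP: "coeff P q = 1" using q2 unfolding P_def by simp
  have dP: "degree P = q"
  proof (rule antisym)
    show "degree P \<le> q" unfolding P_def using q2
      by (intro degree_diff_le) (auto intro: order.trans[OF degree_monom_le])
    show "q \<le> degree P" using cP by (simp add: le_degree)
  qed
  have lP: "lead_coeff P = 1" using cP dP by simp
  have dA: "degree A > 0" using A(3) q2 by simp
  have poly_P: "poly P x = x ^ q - \<beta> ^ (q - 1) * x" for x unfolding P_def by (simp add: poly_monom)
  have "\<beta> ^ (q - 1) * \<beta> = \<beta> ^ q" using q2 by (metis Suc_diff_1 le_zero_eq not_gr0 power_Suc2 zero_neq_numeral)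
  hence Pb: "poly P \<beta> = 0" using poly_P by simp
  have P0: "poly P 0 = 0" using poly_P q2 by simp
  show ?case
  proof (intro exI conjI)
    show "linearized q (pcompose P A)" by (rule lin_pcompose[OF qc linP A(1)])
    show "lead_coeff (pcompose P A) = 1" using lead_coeff_comp[OF dA, of P] lP A(2) by simp
    show "degree (pcompose P A) = q ^ card (insert a I)"
      using insert.hyps by (simp add: degree_pcompose dP A(3))
    show "\<forall>i\<in>insert a I. poly (pcompose P A) (w i) = 0"
      using A(4) Pb P0 by (auto simp: poly_pcompose \<beta>_def)
  qed
qed

lemma prod_roots_dvd:
  fixes p :: "'a::field poly"
  shows "finite S \<Longrightarrow> (\<forall>s\<in>S. poly p s = 0) \<Longrightarrow> (\<Prod>s\<in>S. [:- s, 1:]) dvd p"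
proof (induction S arbitrary: p rule: finite_induct)
  case empty thus ?case by simp
next
  case (insert a S)
  have "(\<Prod>s\<in>S. [:- s, 1:]) dvd p" using insert.IH insert.prems by auto
  then obtain r where r: "p = (\<Prod>s\<in>S. [:- s, 1:]) * r" by (elim dvdE)
  have "poly (\<Prod>s\<in>S. [:- s, 1:]) a \<noteq> 0" using insert.hyps by (auto simp: poly_prod)
  moreover have "poly p a = 0" using insert.prems by auto
  ultimately have "poly r a = 0" using r by simp
  then obtain r' where r': "r = [:- a, 1:] * r'" by (auto simp: poly_eq_0_iff_dvd elim: dvdE)
  have pi: "(\<Prod>s\<in>insert a S. [:- s, 1:]) = [:- a, 1:] * (\<Prod>s\<in>S. [:- s, 1:])"
    by (rule prod.insert[OF insert.hyps(1,2)])
  have "p = (\<Prod>s\<in>insert a S. [:- s, 1:]) * r'" unfolding pi using r r' by (metis mult.assoc mult.commute)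
  thus ?case by simp
qed

lemma monic_eq:
  fixes P A :: "'a::field poly"
  assumes "P dvd A" "lead_coeff P = 1" "lead_coeff A = 1" "degree P = degree A"
  shows "P = A"
proof -
  obtain r where r: "A = P * r" using assms(1) by (auto elim: dvdE)
  have A0: "A \<noteq> 0" using assms(3) by auto
  hence "r \<noteq> 0" "P \<noteq> 0" using r by auto
  hence "degree A = degree P + degree r" using r degree_mult_eq by blast
  hence "degree r = 0" using assms(4) by simp
  then obtain c where c: "r = [:c:]" using degree_eq_zeroE by blast
  have "lead_coeff A = lead_coeff P * c" using r c by (simp add: lead_coeff_mult)
  hence "c = 1" using assms(2,3) by simp
  thus ?thesis using r c by simp
qed

lemma Pi_props:
  assumes qc: "qchar q TYPE('a::{field,finite})" and cq: "card (Fq q :: 'a set) = q"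
    and ind: "Fq_indep q {..<n} (g :: nat \<Rightarrow> 'a)"
  shows "linearized q (Pi_poly q n g)" "lead_coeff (Pi_poly q n g) = 1"
    "degree (Pi_poly q n g) = q ^ n" "\<And>u. u \<in> Fq_span q n g \<Longrightarrow> poly (Pi_poly q n g) u = 0"
    "card (Fq_span q n g) = q ^ n"
proof -
  have csp: "card (Fq_span q n g) = q ^ n"
    unfolding Fq_span_eq using card_span_on[OF _ ind cq qc] by simp
  show "card (Fq_span q n g) = q ^ n" by fact
  have fin: "finite (Fq_span q n g)" by simp
  show lc: "lead_coeff (Pi_poly q n g) = 1" unfolding Pi_poly_def by (simp add: lead_coeff_prod)
  show dg: "degree (Pi_poly q n g) = q ^ n" unfolding Pi_poly_def
    by (subst degree_prod_sum_eq) (auto simp: csp)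
  show rt: "\<And>u. u \<in> Fq_span q n g \<Longrightarrow> poly (Pi_poly q n g) u = 0"
    unfolding Pi_poly_def using fin by (auto simp: poly_prod)
  obtain A where A: "linearized q A" "lead_coeff A = 1" "degree A = q ^ card {..<n}" "\<forall>i\<in>{..<n}. poly A (g i) = 0"
    using annihilator[OF qc, of "{..<n}" g] by auto
  have "\<forall>u\<in>Fq_span q n g. poly A u = 0"
    unfolding Fq_span_eq using lin_kill_span[OF qc A(1), of "{..<n}" g] A(4) by auto
  hence "Pi_poly q n g dvd A" unfolding Pi_poly_def using prod_roots_dvd[OF fin] by blast
  hence "Pi_poly q n g = A" using monic_eq[OF _ lc A(2)] dg A(3) by simp
  thus "linearized q (Pi_poly q n g)" using A(1) by simp
qed

lemma lin_vanish_zero: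
  assumes "linearized q p" "degree p < card U" "\<forall>u\<in>U. poly p u = 0" "finite U"
  shows "p = 0"
proof (rule ccontr)
  assume p0: "p \<noteq> 0"
  have "U \<subseteq> {x. poly p x = 0}" using assms(3) by auto
  hence "card U \<le> card {x. poly p x = 0}" using poly_roots_finite[OF p0] by (rule card_mono[rotated])
  also have "\<dots> \<le> degree p" by (rule card_poly_roots_bound[OF p0])
  finally show False using assms(2) by simp
qed

lemma right_div:
  assumes qc: "qchar q TYPE('a::field)" and linP: "linearized q P" and lP: "lead_coeff P = 1"
    and dP: "degree P = q ^ n" and PU: "\<forall>u\<in>U. poly P u = 0" and fin: "finite U"
    and cU: "card U = q ^ n"
  shows "linearized q A \<Longrightarrow> \<forall>u\<in>U. poly A u = (0::'a) \<Longrightarrow> \<exists>\<beta>. linearized q \<beta> \<and> A = pcompose \<beta> P"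
proof (induction "degree A" arbitrary: A rule: less_induct)
  case less
  have q2: "q \<ge> 2" using qchar_ge2[OF qc] .
  show ?case
  proof (cases "A = 0")
    case True thus ?thesis by (intro exI[of _ 0]) simp
  next
    case False
    define d where "d = qdeg q A"
    have dA: "degree A = q ^ d" using lin_degree[OF q2 less.prems(1) False] d_def by simp
    have dn: "n \<le> d"
    proof (rule ccontr)
      assume "\<not> n \<le> d"
      hence "q ^ d < q ^ n" using q2 by simp
      hence "A = 0" using lin_vanish_zero[OF less.prems(1) _ less.prems(2) fin] dA cU by simp
      thus False using False by simp
    qed
    define c where "c = lead_coeff A"
    define B where "B = pcompose (monom c (q ^ (d - n))) P"
    have linB: "linearized q B" unfolding B_def by (intro lin_pcompose[OF qc lin_monom linP])
    have dB: "degree B = q ^ d"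
    proof -
      have c0: "c \<noteq> 0" using False c_def by simp
      have "degree B = q ^ (d - n) * q ^ n" unfolding B_def
        by (simp add: degree_pcompose degree_monom_eq[OF c0] dP)
      thus ?thesis using dn by (simp add: power_add[symmetric])
    qed
    have lB: "lead_coeff B = c" unfolding B_def
      by (simp add: pcompose_monom lead_coeff_smult lead_coeff_power lP)
    have BU: "\<forall>u\<in>U. poly B u = 0" unfolding B_def using PU q2 by (simp add: poly_pcompose poly_monom)
    define A' where "A' = A - B"
    have linA': "linearized q A'" unfolding A'_def by (rule lin_diff[OF less.prems(1) linB])
    have A'U: "\<forall>u\<in>U. poly A' u = 0" unfolding A'_def using less.prems(2) BU by simp
    have "degree A' < degree A"
    proof (cases "A' = 0")
      case True thus ?thesis using dA q2 by simp
    next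
      case False
      have le: "degree A' \<le> q ^ d" unfolding A'_def by (intro degree_diff_le) (simp_all add: dA dB)
      have "coeff A' (q ^ d) = 0" unfolding A'_def using dA dB lB c_def by simp
      hence "degree A' \<noteq> q ^ d" using False by (metis leading_coeff_0_iff)
      thus ?thesis using le dA by simp
    qed
    then obtain \<beta> where b: "linearized q \<beta>" "A' = pcompose \<beta> P" using less.hyps linA' A'U by blast
    show ?thesis
    proof (intro exI conjI)
      show "linearized q (\<beta> + monom c (q ^ (d - n)))" by (intro lin_add b(1) lin_monom)
      show "A = pcompose (\<beta> + monom c (q ^ (d - n))) P"
        using b(2) unfolding A'_def B_def by (simp add: pcompose_add algebra_simps)
    qed
  qed
qed




section \<open>Moore matrix and Lambda\<close>

lemma lin_sum_degree_lt:
  assumes "q \<ge> 2"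
  shows "degree (\<Sum>j<n. monom (c j) (q ^ j) :: 'a::field poly) < q ^ n"
proof -
  have "degree (\<Sum>j<n. monom (c j) (q ^ j) :: 'a poly) \<le> q ^ n - 1"
  proof (rule degree_le)
    show "\<forall>i>q ^ n - 1. coeff (\<Sum>j<n. monom (c j) (q ^ j) :: 'a poly) i = 0"
    proof (intro allI impI)
      fix i assume i: "i > q ^ n - 1"
      have "\<not> (\<exists>j\<in>{..<n}. q ^ j = i)"
      proof
        assume "\<exists>j\<in>{..<n}. q ^ j = i"
        then obtain j where "j < n" "q ^ j = i" by auto
        hence "i < q ^ n" using assms by (metis power_strict_increasing_iff le_less_trans one_less_numeral_iff semiring_norm(76) less_le_trans[of 1 2 q] order.refl)
        thus False using i by simp
      qed
      thus "coeff (\<Sum>j<n. monom (c j) (q ^ j) :: 'a poly) i = 0"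
        using lin_sum_coeff[of "{..<n}" q c i] assms by simp
    qed
  qed
  moreover have "q ^ n > 0" using assms by simp
  ultimately show ?thesis by linarith
qed

lemma moore_carrier: "moore q n g \<in> carrier_mat n n" unfolding moore_def by simp

lemma moore_det_nz:
  assumes qc: "qchar q TYPE('a::{field,finite})" and cq: "card (Fq q :: 'a set) = q"
    and ind: "Fq_indep q {..<n} (g :: nat \<Rightarrow> 'a)"
  shows "det (moore q n g) \<noteq> 0"
proof
  assume d0: "det (moore q n g) = 0"
  have q2: "q \<ge> 2" using qchar_ge2[OF qc] .
  let ?M = "moore q n g"
  have Mt: "transpose_mat ?M \<in> carrier_mat n n" using moore_carrier by simp
  have "det (transpose_mat ?M) = 0" using d0 det_transpose[OF moore_carrier[of q n g]] by metis
  then obtain v where v: "v \<in> carrier_vec n" "v \<noteq> 0\<^sub>v n" "transpose_mat ?M *\<^sub>v v = 0\<^sub>v n"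
    using det_0_iff_vec_prod_zero_field[OF Mt] by auto
  define L :: "'a poly" where "L = (\<Sum>j<n. monom (v $ j) (q ^ j))"
  have linL: "linearized q L" unfolding L_def by (rule lin_sum[OF _ q2]) simp
  have roots: "poly L (g l) = 0" if l: "l < n" for l
  proof -
    have "(transpose_mat ?M *\<^sub>v v) $ l = 0" using v(3) l by simp
    hence "(\<Sum>j\<in>{0..<n}. g l ^ (q ^ j) * v $ j) = 0"
      using l v(1) by (simp add: scalar_prod_def moore_def)
    thus ?thesis unfolding L_def by (simp add: poly_sum poly_monom atLeast0LessThan mult.commute)
  qed
  have "\<forall>u\<in>Fq_span q n g. poly L u = 0"
    unfolding Fq_span_eq using lin_kill_span[OF qc linL, of "{..<n}" g] roots by auto
  moreover have "card (Fq_span q n g) = q ^ n" using Pi_props(5)[OF qc cq ind] .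
  moreover have "degree L < q ^ n" unfolding L_def by (rule lin_sum_degree_lt[OF q2])
  ultimately have L0: "L = 0" using lin_vanish_zero[OF linL, of "Fq_span q n g"] by simp
  have "v $ j = 0" if j: "j < n" for j
  proof -
    have "coeff L (q ^ j) = v $ j"
      unfolding L_def using lin_sum_coeff[of "{..<n}" q "\<lambda>j. v $ j" "q ^ j"] q2 j by simp
    thus ?thesis using L0 by simp
  qed
  hence "v = 0\<^sub>v n" using v(1) by (intro eq_vecI) auto
  thus False using v(2) by simp
qed

lemma Dmat_carrier: "Dmat q n g i \<in> carrier_mat n n" unfolding Dmat_def by simp

lemma lin_det_Dmat:
  assumes q2: "q \<ge> 2" and n: "n \<ge> 1"
  shows "linearized q (det (Dmat q n g i) :: 'a::field poly)"
proof -
  let ?D = "Dmat q n g i"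
  have nn: "n - 1 < n" using n by simp
  have lap: "det ?D = (\<Sum>j<n. ?D $$ (j, n - 1) * cofactor ?D j (n - 1))"
    by (rule laplace_expansion_column[OF Dmat_carrier nn])
  have cof: "degree (cofactor ?D j (n - 1)) = 0" for j
  proof -
    have md: "mat_delete ?D j (n - 1) \<in> carrier_mat (n - 1) (n - 1)"
      using mat_delete_carrier[OF Dmat_carrier] by simp
    have "degree (det (mat_delete ?D j (n - 1))) \<le> 0 * (n - 1)"
    proof (rule degree_det_le[OF _ md])
      fix a b assume a: "a < n - 1" and b: "b < n - 1"
      show "degree (mat_delete ?D j (n - 1) $$ (a, b)) \<le> 0"
        using a b unfolding mat_delete_def Dmat_def by auto
    qed
    moreover have "degree ((- 1 :: 'a poly) ^ (j + (n - 1))) \<le> degree (- 1 :: 'a poly) * (j + (n - 1))"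
      by (rule degree_power_le)
    ultimately have "degree ((- 1 :: 'a poly) ^ (j + (n - 1))) + degree (det (mat_delete ?D j (n - 1))) = 0"
      by simp
    thus ?thesis unfolding cofactor_def using degree_mult_le le_zero_eq by metis

  qed
  have trm: "linearized q (?D $$ (j, n - 1) * cofactor ?D j (n - 1))" if j: "j < n" for j
  proof -
    obtain c where c: "cofactor ?D j (n - 1) = [:c:]" using cof[of j] degree_eq_zeroE by blast
    have "?D $$ (j, n - 1) = monom 1 (q ^ j)" using j nn unfolding Dmat_def by simp
    hence "?D $$ (j, n - 1) * cofactor ?D j (n - 1) = monom c (q ^ j)" using c by (simp add: mult.commute smult_monom)
    thus ?thesis by (simp add: lin_monom)
  qed
  show ?thesis unfolding lap by (intro lin_sum_gen trm) auto
qed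

lemma lin_Lambda:
  assumes q2: "q \<ge> 2" and n: "n \<ge> 1"
  shows "linearized q (Lambda_poly q n g r :: 'a::field poly)"
  unfolding Lambda_poly_def
  by (intro lin_smult lin_sum_gen lin_det_Dmat[OF q2 n]) auto




lemma Lambda_interp:
  fixes g r :: "nat \<Rightarrow> 'a::field"
  assumes dM: "det (moore q n g) \<noteq> 0" and l: "l < n"
  shows "poly (Lambda_poly q n g r) (g l) = r l"
proof -
  interpret ph: comm_ring_hom "\<lambda>p. poly p (g l)" by unfold_locales auto
  define E where "E i = mat n n (\<lambda>(j, c). if c = n - 1 then g l ^ (q ^ j)
      else if c < i then g c ^ (q ^ j) else g (c + 1) ^ (q ^ j))" for i
  have evE: "poly (det (Dmat q n g i)) (g l) = det (E i)" for i
  proof -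
    have "map_mat (\<lambda>p. poly p (g l)) (Dmat q n g i) = E i"
      unfolding E_def Dmat_def by (intro eq_matI) (auto simp: poly_monom)
    thus ?thesis using ph.hom_det[of "Dmat q n g i"] by simp
  qed
  have E0: "det (E i) = 0" if i: "i < n" "i \<noteq> l" for i
  proof -
    define c0 where "c0 = (if l < i then l else l - 1)"
    have c0: "c0 < n - 1" "c0 \<noteq> n - 1" using i l unfolding c0_def by auto
    have "col (E i) c0 = col (E i) (n - 1)"
    proof (rule eq_vecI)
      fix j assume "j < dim_vec (col (E i) (n - 1))"
      hence j: "j < n" unfolding E_def by simp
      show "col (E i) c0 $ j = col (E i) (n - 1) $ j"
        using j c0 l i unfolding E_def c0_def by auto
    qed (simp add: E_def)
    thus ?thesis using det_identical_columns[of "E i" n c0 "n - 1"] c0 l unfolding E_def by auto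
  qed
  define s :: 'a where "s = (-1) ^ (n - 1 - l)"
  have ss: "s * s = 1" unfolding s_def by (simp flip: power_add)
  have El: "det (moore q n g) = s * det (E l)"
  proof -
    have m: "n = l + 1 + (n - 1 - l)" using l by simp
    have "det (moore q n g) = (-1) ^ (1 * (n - 1 - l)) * det (mat n n (\<lambda>(i, j). moore q n g $$ (i,
        if j < l then j else if j < l + (n - 1 - l) then j + 1 else j - (n - 1 - l))))"
      by (rule det_swap_final_cols[OF moore_carrier m])
    also have "mat n n (\<lambda>(i, j). moore q n g $$ (i,
        if j < l then j else if j < l + (n - 1 - l) then j + 1 else j - (n - 1 - l))) = E l"
      unfolding E_def moore_def using l by (intro eq_matI) auto
    finally show ?thesis unfolding s_def by simp
  qed
  have "poly (Lambda_poly q n g r) (g l) =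
      inverse (det (moore q n g)) * (\<Sum>i<n. ((-1) ^ (n - 1 - i) * r i) * det (E i))"
    unfolding Lambda_poly_def by (simp add: poly_sum evE)
  also have "(\<Sum>i<n. ((-1) ^ (n - 1 - i) * r i) * det (E i)) = (s * r l) * det (E l)"
  proof -
    have "(\<Sum>i<n. ((-1) ^ (n - 1 - i) * r i) * det (E i)) =
        (\<Sum>i<n. if i = l then ((-1) ^ (n - 1 - i) * r i) * det (E i) else 0)"
      by (intro sum.cong) (auto simp: E0)
    also have "\<dots> = ((-1) ^ (n - 1 - l) * r l) * det (E l)" using l by simp
    finally show ?thesis unfolding s_def .
  qed
  also have "det (E l) = s * det (moore q n g)" using El ss by (metis mult.assoc mult_1)
  finally show ?thesis using dM ss by (simp add: field_simps)
qed




lemma pcompose_x_left: "pcompose [:0, 1:] (p :: 'a::comm_ring_1 poly) = p"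
  by (simp add: pcompose_pCons)

lemma mod_elem:
  assumes qc: "qchar q TYPE('a::field)" and v: "v \<in> interp_module q n g r"
  shows "\<exists>\<beta> \<gamma>. linearized q \<beta> \<and> linearized q \<gamma> \<and>
     v = (pcompose \<beta> (Pi_poly q n g) - pcompose \<gamma> (Lambda_poly q n g (r :: nat \<Rightarrow> 'a)), \<gamma>)"
proof -
  have q0: "q > 0" using qchar_ge2[OF qc] by simp
  obtain \<beta> \<gamma> where b: "linearized q \<beta>" "linearized q \<gamma>" and
    v: "v = vadd (lcomp \<beta> (Pi_poly q n g, 0)) (lcomp \<gamma> (- Lambda_poly q n g r, [:0, 1:]))"
    using v unfolding interp_module_def by auto
  have "v = (pcompose \<beta> (Pi_poly q n g) - pcompose \<gamma> (Lambda_poly q n g r), \<gamma>)"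
    unfolding v vadd_def lcomp_def
    using lin_pcompose_uminus[OF qc b(2)] pcomp_lin_zero[OF q0 b(1)] by simp
  thus ?thesis using b by blast
qed

lemma mod_mem:
  assumes qc: "qchar q TYPE('a::field)" and b: "linearized q \<beta>" "linearized q \<gamma>"
  shows "(pcompose \<beta> (Pi_poly q n g) - pcompose \<gamma> (Lambda_poly q n g (r :: nat \<Rightarrow> 'a)), \<gamma>) \<in> interp_module q n g r"
proof -
  have q0: "q > 0" using qchar_ge2[OF qc] by simp
  have eq: "vadd (lcomp \<beta> (Pi_poly q n g, 0)) (lcomp \<gamma> (- Lambda_poly q n g r, [:0, 1:])) =
     (pcompose \<beta> (Pi_poly q n g) - pcompose \<gamma> (Lambda_poly q n g r), \<gamma>)"
    unfolding vadd_def lcomp_def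
    using lin_pcompose_uminus[OF qc b(2)] pcomp_lin_zero[OF q0 b(1)] by simp
  show ?thesis unfolding interp_module_def
    by (rule CollectI, rule exI[of _ \<beta>], rule exI[of _ \<gamma>]) (simp add: eq b)
qed

lemma mod_elem_props:
  assumes qc: "qchar q TYPE('a::{field,finite})" and v: "v \<in> interp_module q n g r"
    and linPi: "linearized q (Pi_poly q n g)" and linL: "linearized q (Lambda_poly q n g (r :: nat \<Rightarrow> 'a))"
    and interp: "\<And>i. i < n \<Longrightarrow> poly (Lambda_poly q n g r) (g i) = r i"
  shows "linearized q (fst v)" "linearized q (snd v)"
    "\<And>i. i < n \<Longrightarrow> poly (fst v) (g i) + poly (snd v) (r i) = 0"
proof -
  have q0: "q > 0" using qchar_ge2[OF qc] by simp
  obtain \<beta> \<gamma> where b: "linearized q \<beta>" "linearized q \<gamma>" and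
    v: "v = (pcompose \<beta> (Pi_poly q n g) - pcompose \<gamma> (Lambda_poly q n g r), \<gamma>)"
    using mod_elem[OF qc v] by blast
  show "linearized q (fst v)" unfolding v by (simp add: lin_diff lin_pcompose[OF qc] b linPi linL)
  show "linearized q (snd v)" unfolding v using b by simp
  fix i assume i: "i < n"
  have "poly (Pi_poly q n g) (g i) = 0" unfolding Pi_poly_def
  proof -
    have "g i \<in> Fq_span q n g" unfolding Fq_span_def
    proof (rule CollectI, rule exI[of _ "\<lambda>j. if j = i then 1 else 0"], intro conjI)
      have "(\<Sum>j<n. (if j = i then 1 else 0) * g j) = (\<Sum>j<n. if j = i then g j else 0)"
        by (rule sum.cong) auto
      thus "g i = (\<Sum>j<n. (if j = i then 1 else 0) * g j)" using i by simp
      show "\<forall>j<n. (if j = i then 1 else 0) \<in> Fq q" using Fq_0[OF q0] Fq_1 by auto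
    qed
    thus "poly (\<Prod>u\<in>Fq_span q n g. [:- u, 1:]) (g i) = 0" by (simp add: poly_prod prod_zero_iff)
  qed
  thus "poly (fst v) (g i) + poly (snd v) (r i) = 0"
    unfolding v using interp[OF i] lin_poly0[OF q0 b(1)] by (simp add: poly_pcompose)
qed

lemma basis_decomp:
  assumes "is_basis2 q M b1 b2" "v \<in> M"
  shows "\<exists>a1 a2. linearized q a1 \<and> linearized q a2 \<and>
    v = (pcompose a1 (fst b1) + pcompose a2 (fst b2), pcompose a1 (snd b1) + pcompose a2 (snd b2))"
  using assms unfolding is_basis2_def vadd_def lcomp_def by auto

lemma basis_mem:
  assumes qc: "qchar q TYPE('a::field)" and B: "is_basis2 q M b1 (b2 :: 'a poly \<times> 'a poly)"
  shows "b1 \<in> M" "b2 \<in> M" "b1 \<noteq> (0, 0)" "b2 \<noteq> (0, 0)"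
proof -
  have q0: "q > 0" using qchar_ge2[OF qc] by simp
  have e1: "vadd (lcomp [:0, 1:] b1) (lcomp 0 b2) = b1"
    unfolding vadd_def lcomp_def by (simp add: pcompose_x_left)
  have e2: "vadd (lcomp 0 b1) (lcomp [:0, 1:] b2) = b2"
    unfolding vadd_def lcomp_def by (simp add: pcompose_x_left)
  have Meq: "M = {vadd (lcomp a1 b1) (lcomp a2 b2) | a1 a2. linearized q a1 \<and> linearized q a2}"
    using B unfolding is_basis2_def by blast
  have ind: "\<And>a1 a2. linearized q a1 \<Longrightarrow> linearized q a2 \<Longrightarrow> vadd (lcomp a1 b1) (lcomp a2 b2) = (0, 0)
         \<Longrightarrow> a1 = 0 \<and> a2 = 0"
    using B unfolding is_basis2_def by blast
  show "b1 \<in> M" unfolding Meq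
    by (rule CollectI, rule exI[of _ "[:0, 1:]"], rule exI[of _ 0]) (simp add: e1 lin_x)
  show "b2 \<in> M" unfolding Meq
    by (rule CollectI, rule exI[of _ 0], rule exI[of _ "[:0, 1:]"]) (simp add: e2 lin_x)
  show "b1 \<noteq> (0, 0)"
  proof
    assume "b1 = (0, 0)"
    hence "vadd (lcomp [:0, 1:] b1) (lcomp 0 b2) = (0, 0)" using e1 by simp
    thus False using ind[of "[:0, 1:]" 0, OF lin_x lin_0] by simp
  qed
  show "b2 \<noteq> (0, 0)"
  proof
    assume "b2 = (0, 0)"
    hence "vadd (lcomp 0 b1) (lcomp [:0, 1:] b2) = (0, 0)" using e2 by simp
    thus False using ind[of 0 "[:0, 1:]", OF lin_0 lin_x] by simp
  qed
qed




context
  fixes q n t :: nat and g e :: "nat \<Rightarrow> 'a::{field,finite}" and S :: "nat set" and a :: "nat \<Rightarrow> nat \<Rightarrow> 'a"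
  assumes qc: "qchar q TYPE('a)" and cq: "card (Fq q :: 'a set) = q"
    and ind: "Fq_indep q {..<n} g" and SS: "S \<subseteq> {..<n}" and cS: "card S = t"
    and indS: "Fq_indep q S e"
    and dep: "\<forall>j\<in>{..<n} - S. (\<forall>i\<in>S. a j i \<in> Fq q) \<and> e j = (\<Sum>i\<in>S. a j i * e i)"
begin

lemma key_vanish:
  assumes h: "linearized q h" and y: "linearized q y" and hy: "\<forall>i<n. poly h (g i) = poly y (e i)"
  shows "h = 0 \<or> q ^ (n - t) \<le> degree h"
proof -
  define J where "J = {..<n} - S"
  have finS: "finite S" using SS finite_subset by blast
  have cJ: "card J = n - t" unfolding J_def using card_Diff_subset[OF finS SS] cS by simp
  have finJ: "finite J" unfolding J_def by simp
  have JS: "{..<n} = J \<union> S" "J \<inter> S = {}" unfolding J_def using SS by auto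
  define coef where "coef d l = (if l \<in> J then d l else - (\<Sum>j\<in>J. d j * a j l))" for d :: "nat \<Rightarrow> 'a" and l
  define x where "x d = (\<Sum>l<n. coef d l * g l)" for d
  let ?P = "PiE J (\<lambda>_. Fq q :: 'a set)"
  have coefFq: "coef d l \<in> Fq q" if d: "d \<in> ?P" and l: "l < n" for d l
  proof (cases "l \<in> J")
    case True thus ?thesis using d unfolding coef_def by (auto simp: PiE_def Pi_def)
  next
    case False
    hence lS: "l \<in> S" using l JS by auto
    have "(\<Sum>j\<in>J. d j * a j l) \<in> Fq q"
    proof (rule Fq_sum[OF qc])
      fix j assume j: "j \<in> J"
      hence "d j \<in> Fq q" using d by (auto simp: PiE_def Pi_def)
      moreover have "a j l \<in> Fq q" using dep j lS unfolding J_def by auto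
      ultimately show "d j * a j l \<in> Fq q" by (rule Fq_mult)
    qed
    thus ?thesis using False unfolding coef_def using Fq_neg[OF qc] by auto
  qed
  have sum0: "(\<Sum>l<n. coef d l * e l) = 0" for d
  proof -
    have "(\<Sum>l<n. coef d l * e l) = (\<Sum>l\<in>J. coef d l * e l) + (\<Sum>l\<in>S. coef d l * e l)"
      unfolding JS(1) by (rule sum.union_disjoint[OF finJ finS JS(2)])
    also have "(\<Sum>l\<in>J. coef d l * e l) = (\<Sum>j\<in>J. d j * e j)" unfolding coef_def by simp
    also have "(\<Sum>l\<in>S. coef d l * e l) = (\<Sum>l\<in>S. - ((\<Sum>j\<in>J. d j * a j l) * e l))"
      unfolding coef_def using JS(2) by (intro sum.cong) auto
    also have "\<dots> = - (\<Sum>l\<in>S. \<Sum>j\<in>J. d j * a j l * e l)"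
      by (simp add: sum_negf sum_distrib_right)
    also have "(\<Sum>l\<in>S. \<Sum>j\<in>J. d j * a j l * e l) = (\<Sum>j\<in>J. d j * (\<Sum>l\<in>S. a j l * e l))"
      by (subst sum.swap) (simp add: sum_distrib_left mult.assoc)
    also have "\<dots> = (\<Sum>j\<in>J. d j * e j)" using dep unfolding J_def by auto
    finally show ?thesis by simp
  qed
  have root: "poly h (x d) = 0" if d: "d \<in> ?P" for d
  proof -
    have "poly h (x d) = (\<Sum>l<n. coef d l * poly h (g l))"
      unfolding x_def by (rule lin_poly_lincomb[OF qc h]) (use coefFq[OF d] in auto)
    also have "\<dots> = (\<Sum>l<n. coef d l * poly y (e l))" using hy by simp
    also have "\<dots> = poly y (\<Sum>l<n. coef d l * e l)"
      by (rule lin_poly_lincomb[OF qc y, symmetric]) (use coefFq[OF d] in auto)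
    also have "\<dots> = 0" unfolding sum0 using lin_poly0[OF _ y] qchar_ge2[OF qc] by simp
    finally show ?thesis .
  qed
  have inj: "inj_on x ?P"
  proof (rule inj_onI)
    fix d d' assume d: "d \<in> ?P" and d': "d' \<in> ?P" and eq: "x d = x d'"
    have "(\<Sum>l<n. (coef d l - coef d' l) * g l) = 0"
      using eq unfolding x_def by (simp add: left_diff_distrib sum_subtractf)
    moreover have "\<forall>l\<in>{..<n}. coef d l - coef d' l \<in> Fq q"
      using coefFq[OF d] coefFq[OF d'] Fq_diff[OF qc] by auto
    ultimately have z: "\<forall>l\<in>{..<n}. coef d l - coef d' l = 0"
      using ind[unfolded Fq_indep_def, rule_format, of "\<lambda>l. coef d l - coef d' l"] by auto
    show "d = d'"
    proof
      fix l show "d l = d' l"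
      proof (cases "l \<in> J")
        case True
        hence "l < n" unfolding J_def by auto
        hence "coef d l - coef d' l = 0" using z by auto
        thus ?thesis using True unfolding coef_def by simp
      next
        case False thus ?thesis using d d' by (auto simp: PiE_def extensional_def)
      qed
    qed
  qed
  have cP: "card (x ` ?P) = q ^ (n - t)"
    using card_image[OF inj] finJ cq cJ by (simp add: card_PiE)
  show ?thesis
  proof (cases "h = 0")
    case False
    have "x ` ?P \<subseteq> {z. poly h z = 0}" using root by auto
    hence "card (x ` ?P) \<le> card {z. poly h z = 0}"
      by (rule card_mono[OF poly_roots_finite[OF False]])
    also have "\<dots> \<le> degree h" by (rule card_poly_roots_bound[OF False])
    finally show ?thesis using cP by simp
  qed simp
qed

lemma span_e_card: "card (span_on q S e) = q ^ t"
  using card_span_on[OF _ indS cq qc] SS cS finite_subset by blast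

lemma kill_all:
  assumes y: "linearized q y" and k: "\<forall>i<n. poly y (e i) = 0"
  shows "\<forall>u\<in>span_on q S e. poly y u = 0"
  using lin_kill_span[OF qc y, of S e] k SS finite_subset by blast

lemma kill_deg:
  assumes y: "linearized q y" "y \<noteq> 0" and k: "\<forall>u\<in>span_on q S e. poly y u = 0"
  shows "q ^ t \<le> degree y"
proof -
  have "span_on q S e \<subseteq> {z. poly y z = 0}" using k by auto
  hence "card (span_on q S e) \<le> card {z. poly y z = 0}"
    by (rule card_mono[OF poly_roots_finite[OF y(2)]])
  also have "\<dots> \<le> degree y" by (rule card_poly_roots_bound[OF y(2)])
  finally show ?thesis using span_e_card by simp
qed

lemma annih_e: "\<exists>W. linearized q W \<and> W \<noteq> 0 \<and> degree W = q ^ t \<and> (\<forall>i<n. poly W (e i) = 0)"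
proof -
  have finS: "finite S" using SS finite_subset by blast
  obtain W where W: "linearized q W" "lead_coeff W = 1" "degree W = q ^ card S" "\<forall>i\<in>S. poly W (e i) = 0"
    using annihilator[OF qc finS, of e] by blast
  have "poly W (e i) = 0" if i: "i < n" for i
  proof (cases "i \<in> S")
    case True thus ?thesis using W(4) by auto
  next
    case False
    hence "(\<forall>l\<in>S. a i l \<in> Fq q) \<and> e i = (\<Sum>l\<in>S. a i l * e l)" using dep i by auto
    thus ?thesis using lin_poly_lincomb[OF qc W(1) finS, of "a i" e] W(4) by simp
  qed
  moreover have "W \<noteq> 0" using W(2) by auto
  ultimately show ?thesis using W cS by blast
qed

end




lemma comb3:
  fixes a1 a2 v1 v2 u1 u2 :: "'a::field poly" and K :: nat
  assumes q2: "q \<ge> 2" and lins: "linearized q a1" "linearized q a2" "linearized q v1" "linearized q v2"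
       "linearized q u1" "linearized q u2"
    and K: "K \<ge> 1" and v1: "v1 \<noteq> 0" and v2: "v2 = 0 \<or> degree v2 * K < degree v1"
    and u2: "u2 \<noteq> 0" and u1: "degree u1 \<le> degree u2 * K"
  defines "z1 \<equiv> pcompose a1 v1 + pcompose a2 u1" and "z2 \<equiv> pcompose a1 v2 + pcompose a2 u2"
  shows "(a2 \<noteq> 0 \<and> z2 \<noteq> 0 \<and> degree z2 = degree a2 * degree u2 \<and> degree z1 \<le> degree a2 * degree u2 * K)
    \<or> (a1 \<noteq> 0 \<and> degree z1 = degree a1 * degree v1 \<and> degree z2 * K < degree z1)
    \<or> (a1 = 0 \<and> a2 = 0)"
proof -
  consider "a2 \<noteq> 0 \<and> (a1 = 0 \<or> degree a1 * degree v1 \<le> degree a2 * degree u2 * K)"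
    | "a1 \<noteq> 0 \<and> (a2 = 0 \<or> degree a2 * degree u2 * K < degree a1 * degree v1)"
    | "a1 = 0 \<and> a2 = 0" by linarith
  thus ?thesis
  proof cases
    case 1 thus ?thesis using comb_caseA[OF q2 lins K v1 v2 u2 u1] unfolding z1_def z2_def by blast
  next
    case 2 thus ?thesis using comb_caseB[OF q2 lins K v1 v2 u2 u1] unfolding z1_def z2_def by auto
  qed simp
qed

lemma lin_deg_bound:
  assumes q2: "q \<ge> 2" and f: "linearized q f" and d: "degree f < q ^ k"
  shows "degree f \<le> q ^ (k - 1)"
proof (cases "f = 0")
  case False
  have "q ^ qdeg q f < q ^ k" using lin_degree[OF q2 f False] d by simp
  hence "qdeg q f < k" using q2 by simp
  hence "q ^ qdeg q f \<le> q ^ (k - 1)" using q2 by (intro power_increasing) auto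
  thus ?thesis using lin_degree[OF q2 f False] by simp
qed simp




lemma rank_set_props:
  "finite {card S | S. S \<subseteq> {..<n} \<and> Fq_indep q S v}"
  "0 \<in> {card S | S. S \<subseteq> {..<n} \<and> Fq_indep q S v}"
  "\<forall>x\<in>{card S | S. S \<subseteq> {..<n} \<and> Fq_indep q S v}. x \<le> n"
proof -
  have "{card S | S. S \<subseteq> {..<n} \<and> Fq_indep q S v} \<subseteq> card ` Pow {..<n}" by auto
  thus "finite {card S | S. S \<subseteq> {..<n} \<and> Fq_indep q S v}" by (rule finite_subset) simp
  have "Fq_indep q {} v" unfolding Fq_indep_def by simp
  thus "0 \<in> {card S | S. S \<subseteq> {..<n} \<and> Fq_indep q S v}" by force
  show "\<forall>x\<in>{card S | S. S \<subseteq> {..<n} \<and> Fq_indep q S v}. x \<le> n"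
    using card_mono[of "{..<n}"] by fastforce
qed

lemma rank_dist_le: "rank_dist q n c r \<le> n"
  unfolding rank_dist_def using rank_set_props[of n q "\<lambda>i. c i - r i"]
  by (metis (no_types, lifting) Max_in empty_iff)

theorem lemma33:
  fixes q m n k :: nat and g r :: "nat \<Rightarrow> 'a::{field, finite}"
    and b1 b2 :: "'a poly \<times> 'a poly"
  assumes "\<exists>p e. prime p \<and> e \<ge> 1 \<and> q = p ^ e"
    and "m \<ge> 1" and "card (UNIV :: 'a set) = q ^ m"
    and "1 \<le> k" and "k \<le> n"
    and "Fq_indep q {..<n} g"
    and "minimal_basis2 q k (interp_module q n g r) b1 b2"
    and "lpos q k b1 = 1" and "lpos q k b2 = 2"
    and "2 * Min ((\<lambda>c. rank_dist q n c r) ` gabidulin q n k g) \<le> n - k"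
  shows "wqdeg q k b2 = Min ((\<lambda>c. rank_dist q n c r) ` gabidulin q n k g) + k - 1 \<and>
         qdeg q (snd b2) = Min ((\<lambda>c. rank_dist q n c r) ` gabidulin q n k g) \<and>
         wqdeg q k b1 = n - Min ((\<lambda>c. rank_dist q n c r) ` gabidulin q n k g)"
proof -
  obtain p e where pe: "prime p" "e \<ge> 1" "q = p ^ e" using assms(1) by auto
  have cardp: "card (UNIV :: 'a set) = p ^ (e * m)" using assms(3) pe(3) by (simp add: power_mult)
  have em: "e * m \<ge> 1" using pe(2) assms(2) by simp
  have CH: "CHAR('a) = p" by (rule char_setup[OF pe(1) cardp em])
  have qc: "qchar q TYPE('a)" unfolding qchar_def using pe CH by auto
  have q2: "q \<ge> 2" using qchar_ge2[OF qc] .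
  have q0: "q > 0" using q2 by simp
  have cq: "card (Fq q :: 'a set) = q" by (rule card_Fq[OF qc assms(2,3)])
  have n1: "n \<ge> 1" using assms(4,5) by simp
  note ind = assms(6)
  note Pi = Pi_props[OF qc cq ind]
  have dM: "det (moore q n g) \<noteq> 0" by (rule moore_det_nz[OF qc cq ind])
  have linL: "linearized q (Lambda_poly q n g r)" by (rule lin_Lambda[OF q2 n1])
  have interp: "\<And>i. i < n \<Longrightarrow> poly (Lambda_poly q n g r) (g i) = r i" by (rule Lambda_interp[OF dM])
  define M where "M = interp_module q n g r"
  have B: "is_basis2 q M b1 b2" using assms(7) unfolding minimal_basis2_def M_def by simp
  have mprops: "linearized q (fst v)" "linearized q (snd v)"
      "\<And>i. i < n \<Longrightarrow> poly (fst v) (g i) + poly (snd v) (r i) = 0" if vM: "v \<in> M" for v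
    using mod_elem_props[OF qc vM[unfolded M_def] Pi(1) linL interp] by auto
  define K where "K = q ^ (k - 1)"
  have K1: "K \<ge> 1" unfolding K_def using q2 by simp
  define T where "T = (\<lambda>c. rank_dist q n c r) ` gabidulin q n k g"
  define t where "t = Min T"
  have "(\<lambda>i. if i < n then poly 0 (g i) else 0) \<in> gabidulin q n k g"
    unfolding gabidulin_def by (rule CollectI, rule exI[of _ 0]) (simp add: q0)
  hence Tne: "T \<noteq> {}" unfolding T_def by blast
  have "T \<subseteq> {..n}" unfolding T_def using rank_dist_le by auto
  hence Tfin: "finite T" using finite_subset by blast
  have "t \<in> T" unfolding t_def using Min_in[OF Tfin Tne] .
  then obtain c where c: "c \<in> gabidulin q n k g" "rank_dist q n c r = t" unfolding T_def by auto
  obtain f where f: "linearized q f" "degree f < q ^ k" "c = (\<lambda>i. if i < n then poly f (g i) else 0)"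
    using c(1) unfolding gabidulin_def by auto
  have degf: "degree f \<le> K" unfolding K_def by (rule lin_deg_bound[OF q2 f(1,2)])
  define ee where "ee i = c i - r i" for i
  have ee: "\<And>i. i < n \<Longrightarrow> ee i = poly f (g i) - r i" unfolding ee_def f(3) by simp
  define R where "R = {card S | S. S \<subseteq> {..<n} \<and> Fq_indep q S ee}"
  have Rp: "finite R" "0 \<in> R" "\<forall>x\<in>R. x \<le> n" unfolding R_def by (rule rank_set_props)+
  have tR: "t = Max R" using c(2) unfolding rank_dist_def R_def ee_def by simp
  have "t \<in> R" unfolding tR using Max_in[OF Rp(1)] Rp(2) by blast
  then obtain S where S: "S \<subseteq> {..<n}" "Fq_indep q S ee" "card S = t" unfolding R_def by auto
  have maxS: "card S' \<le> t" if "S' \<subseteq> {..<n}" "Fq_indep q S' ee" for S'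
    unfolding tR using that Rp(1) unfolding R_def by (intro Max_ge) auto
  have finS: "finite S" using S(1) finite_subset by blast
  have tn: "t + k - 1 < n - t" using assms(10) assms(4,5) unfolding T_def[symmetric] t_def[symmetric] by linarith
  have depx: "\<exists>a. (\<forall>i\<in>S. a i \<in> Fq q) \<and> ee j = (\<Sum>i\<in>S. a i * ee i)" if j: "j \<in> {..<n} - S" for j
  proof -
    have jS: "j \<notin> S" "j < n" using j by auto
    have "card (insert j S) = t + 1" using jS finS S(3) by simp
    hence "\<not> Fq_indep q (insert j S) ee" using maxS[of "insert j S"] S(1) jS by auto
    then obtain cc where cc: "\<forall>i\<in>insert j S. cc i \<in> Fq q" "(\<Sum>i\<in>insert j S. cc i * ee i) = 0"
       "\<exists>i\<in>insert j S. cc i \<noteq> 0" unfolding Fq_indep_def by blast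
    have sum: "cc j * ee j + (\<Sum>i\<in>S. cc i * ee i) = 0" using cc(2) finS jS by simp
    have ccj: "cc j \<noteq> 0"
    proof
      assume "cc j = 0"
      hence "(\<Sum>i\<in>S. cc i * ee i) = 0" using sum by simp
      hence "\<forall>i\<in>S. cc i = 0" using S(2) cc(1) unfolding Fq_indep_def by blast
      thus False using cc(3) \<open>cc j = 0\<close> by auto
    qed
    show ?thesis
    proof (intro exI conjI ballI)
      fix i assume "i \<in> S"
      hence "cc i / cc j \<in> Fq q" using cc(1) Fq_divide by auto
      hence "- (cc i / cc j) \<in> Fq q" by (rule Fq_neg[OF qc])
      thus "- cc i / cc j \<in> Fq q" by simp
    next
      have "cc j * ee j = - (\<Sum>i\<in>S. cc i * ee i)" using sum by (simp add: eq_neg_iff_add_eq_0)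
      hence "ee j = (\<Sum>i\<in>S. cc i * ee i) * (- inverse (cc j))" using ccj
        by (metis (no_types, lifting) mult.commute mult_minus_right nonzero_mult_div_cancel_left divide_inverse)
      also have "\<dots> = (\<Sum>i\<in>S. cc i * ee i * (- inverse (cc j)))" by (rule sum_distrib_right)
      also have "\<dots> = (\<Sum>i\<in>S. - cc i / cc j * ee i)"
        by (intro sum.cong refl) (simp add: divide_inverse)
      finally show "ee j = (\<Sum>i\<in>S. - cc i / cc j * ee i)" .
    qed
  qed
  have "\<forall>j\<in>{..<n} - S. \<exists>a. (\<forall>i\<in>S. a i \<in> Fq q) \<and> ee j = (\<Sum>i\<in>S. a i * ee i)"
    using depx by blast
  hence "\<exists>a. \<forall>j\<in>{..<n} - S. (\<forall>i\<in>S. a j i \<in> Fq q) \<and> ee j = (\<Sum>i\<in>S. a j i * ee i)"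
    by (rule bchoice)
  then obtain a where dep: "\<forall>j\<in>{..<n} - S. (\<forall>i\<in>S. a j i \<in> Fq q) \<and> ee j = (\<Sum>i\<in>S. a j i * ee i)"
    by blast
  note ctx = qc cq ind S(1) S(3) S(2) dep
  note kv = key_vanish[OF ctx] and kall = kill_all[OF ctx] and kdeg = kill_deg[OF ctx]
    and spc = span_e_card[OF ctx]
  have hrel: "\<forall>i<n. poly (fst v + pcompose (snd v) f) (g i) = poly (snd v) (ee i)" if v: "v \<in> M" for v
  proof (intro allI impI)
    fix i assume i: "i < n"
    have "poly (fst v) (g i) = - poly (snd v) (r i)" using mprops(3)[OF v i] by (simp add: eq_neg_iff_add_eq_0)
    thus "poly (fst v + pcompose (snd v) f) (g i) = poly (snd v) (ee i)"
      using ee[OF i] lin_poly_diff[OF qc mprops(2)[OF v]] by (simp add: poly_pcompose)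
  qed
  obtain v1 v2 where b1: "b1 = (v1, v2)" by (cases b1)
  obtain u1 u2 where b2: "b2 = (u1, u2)" by (cases b2)
  note bm = basis_mem[OF qc B]
  have lv: "linearized q v1" "linearized q v2" using mprops(1,2)[OF bm(1)] b1 by auto
  have lu: "linearized q u1" "linearized q u2" using mprops(1,2)[OF bm(2)] b2 by auto
  have p1: "v1 \<noteq> 0 \<and> (v2 = 0 \<or> qdeg q v2 + (k - 1) < qdeg q v1)"
    using lpos1_cond[OF q2 lv] bm(3) assms(8) b1 by auto
  have p2: "u2 \<noteq> 0 \<and> (u1 = 0 \<or> qdeg q u1 \<le> qdeg q u2 + (k - 1))"
    using lpos2_cond[OF q2 lu] bm(4) assms(9) b2 by auto
  have v1nz: "v1 \<noteq> 0" and u2nz: "u2 \<noteq> 0" using p1 p2 by auto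
  have dv: "v2 = 0 \<or> degree v2 * K < degree v1"
    using p1 deg_comp_le_iff(1)[OF q2 lv(2) lv(1) _ v1nz, of "k - 1"] unfolding K_def by auto
  have du: "degree u1 \<le> degree u2 * K"
  proof (cases "u1 = 0")
    case False
    have "qdeg q u1 \<le> qdeg q u2 + (k - 1)" using p2 False by auto
    hence "q ^ qdeg q u1 \<le> q ^ (qdeg q u2 + (k - 1))" using q2 by (intro power_increasing) auto
    thus ?thesis using lin_degree[OF q2 lu(1) False] lin_degree[OF q2 lu(2) u2nz]
      unfolding K_def by (simp add: power_add)
  qed simp
  have decomp: "\<exists>a1 a2. linearized q a1 \<and> linearized q a2 \<and>
      w = (pcompose a1 v1 + pcompose a2 u1, pcompose a1 v2 + pcompose a2 u2)" if "w \<in> M" for w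
    using basis_decomp[OF B that] b1 b2 by simp
  note c3 = comb3[OF q2 _ _ lv lu K1 v1nz dv u2nz du]
  \<comment> \<open>Step 1: degree u2 \<le> q^t\<close>
  obtain W where W: "linearized q W" "W \<noteq> 0" "degree W = q ^ t" "\<forall>i<n. poly W (ee i) = 0"
    using annih_e[OF ctx] by blast
  define A0 where "A0 = pcompose W (Lambda_poly q n g r - f)"
  have linA0: "linearized q A0" unfolding A0_def by (intro lin_pcompose[OF qc W(1)] lin_diff linL f(1))
  have A0g: "poly A0 (g i) = 0" if i: "i < n" for i
  proof -
    have "poly A0 (g i) = poly W (- ee i)" unfolding A0_def using interp[OF i] ee[OF i] by (simp add: poly_pcompose)
    also have "\<dots> = 0" using lin_poly_neg[OF qc W(1)] W(4) i by simp
    finally show ?thesis .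
  qed
  have A0span: "\<forall>u\<in>Fq_span q n g. poly A0 u = 0"
    unfolding Fq_span_eq using lin_kill_span[OF qc linA0, of "{..<n}" g] A0g by auto
  obtain \<beta> where bt: "linearized q \<beta>" "A0 = pcompose \<beta> (Pi_poly q n g)"
    using right_div[OF qc Pi(1) Pi(2) Pi(3) _ _ Pi(5), of A0] Pi(4) linA0 A0span by auto
  have "(pcompose \<beta> (Pi_poly q n g) - pcompose W (Lambda_poly q n g r), W) \<in> M"
    unfolding M_def by (rule mod_mem[OF qc bt(1) W(1)])
  moreover have "pcompose \<beta> (Pi_poly q n g) - pcompose W (Lambda_poly q n g r) = - pcompose W f"
  proof -
    have h: "pcompose W (Lambda_poly q n g r) - pcompose W f = pcompose \<beta> (Pi_poly q n g)"
      using bt(2) unfolding A0_def by (simp add: lin_pcompose_diff[OF qc W(1)])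
    show ?thesis by (simp add: h[symmetric])
  qed
  ultimately have wM: "(- pcompose W f, W) \<in> M" by simp
  obtain a1 a2 where a: "linearized q a1" "linearized q a2"
    "(- pcompose W f, W) = (pcompose a1 v1 + pcompose a2 u1, pcompose a1 v2 + pcompose a2 u2)"
    using decomp[OF wM] by blast
  have z1: "pcompose a1 v1 + pcompose a2 u1 = - pcompose W f" and z2: "pcompose a1 v2 + pcompose a2 u2 = W"
    using a(3) by auto
  have dWf: "degree (- pcompose W f) \<le> degree W * K" using degf by (simp add: degree_pcompose)
  have du2t: "degree u2 \<le> q ^ t"
  proof -
    from c3[OF a(1,2)] z1 z2 consider
      "a2 \<noteq> 0" "degree W = degree a2 * degree u2" | "degree W * K < degree (- pcompose W f)" | "W = 0"
      by auto
    thus ?thesis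
    proof cases
      case 1
      have "degree a2 \<ge> 1" using lin_deg_pos[OF q2 a(2) 1(1)] .
      hence "degree u2 \<le> degree W" using 1(2) by simp
      thus ?thesis using W(3) by simp
    next
      case 2 thus ?thesis using dWf by simp
    qed (use W(2) in simp)
  qed
  \<comment> \<open>Step 2: u2 kills the errors, degree u2 = q^t\<close>
  define h2 where "h2 = u1 + pcompose u2 f"
  have linh2: "linearized q h2" unfolding h2_def by (intro lin_add lu(1) lin_pcompose[OF qc lu(2) f(1)])
  have rel2: "\<forall>i<n. poly h2 (g i) = poly u2 (ee i)" using hrel[OF bm(2)] b2 unfolding h2_def by simp
  have "degree (pcompose u2 f) \<le> degree u2 * K" using degf by (simp add: degree_pcompose)
  hence "degree h2 \<le> degree u2 * K" unfolding h2_def using du degree_add_le by blast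
  also have "\<dots> \<le> q ^ t * q ^ (k - 1)" using du2t unfolding K_def by simp
  also have "\<dots> = q ^ (t + k - 1)" using assms(4) by (simp add: power_add[symmetric])
  also have "\<dots> < q ^ (n - t)" using tn q2 by simp
  finally have "h2 = 0" using kv[OF linh2 lu(2) rel2] by linarith
  hence ku2: "\<forall>i<n. poly u2 (ee i) = 0" using rel2 by simp
  have ku2s: "\<forall>y\<in>span_on q S ee. poly u2 y = 0" by (rule kall[OF lu(2) ku2])
  have "q ^ t \<le> degree u2" by (rule kdeg[OF lu(2) u2nz ku2s])
  hence du2: "degree u2 = q ^ t" using du2t by simp
  have qu2: "qdeg q u2 = t" by (rule qdeg_eq[OF q2 du2])
  \<comment> \<open>Step 3: lower bound for v1\<close>
  have dv1lo: "q ^ (n - t) \<le> degree v1"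
  proof (rule ccontr)
    assume lt: "\<not> q ^ (n - t) \<le> degree v1"
    define h1 where "h1 = v1 + pcompose v2 f"
    have linh1: "linearized q h1" unfolding h1_def by (intro lin_add lv(1) lin_pcompose[OF qc lv(2) f(1)])
    have rel1: "\<forall>i<n. poly h1 (g i) = poly v2 (ee i)" using hrel[OF bm(1)] b1 unfolding h1_def by simp
    have dv1p: "degree v1 \<ge> 1" by (rule lin_deg_pos[OF q2 lv(1) v1nz])
    have "degree (pcompose v2 f) < degree v1"
    proof (cases "v2 = 0")
      case True thus ?thesis using dv1p pcomp_lin_zero[OF q0 lv(2)] by simp
    next
      case False
      have "degree (pcompose v2 f) \<le> degree v2 * K" using degf by (simp add: degree_pcompose)
      thus ?thesis using dv False by simp
    qed
    hence dh1: "degree h1 = degree v1" unfolding h1_def by (rule degree_add_eq_left)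
    hence "h1 \<noteq> 0" using dv1p by auto
    thus False using kv[OF linh1 lv(2) rel1] dh1 lt by simp
  qed
  \<comment> \<open>Step 4: upper bound for v1\<close>
  have PiM: "(Pi_poly q n g, 0) \<in> M"
    using mod_mem[OF qc lin_x lin_0, of n g r] unfolding M_def by (simp add: pcompose_x_left)
  obtain a1' a2' where a': "linearized q a1'" "linearized q a2'"
    "(Pi_poly q n g, 0) = (pcompose a1' v1 + pcompose a2' u1, pcompose a1' v2 + pcompose a2' u2)"
    using decomp[OF PiM] by blast
  have Pi0: "Pi_poly q n g \<noteq> 0" using Pi(2) by auto
  have a1nz: "a1' \<noteq> 0" and dPi: "q ^ n = degree a1' * degree v1"
  proof -
    from c3[OF a'(1,2)] a'(3) Pi0 have "a1' \<noteq> 0 \<and> degree (Pi_poly q n g) = degree a1' * degree v1"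
      by auto
    thus "a1' \<noteq> 0" "q ^ n = degree a1' * degree v1" using Pi(3) by auto
  qed
  have z2': "pcompose a1' v2 + pcompose a2' u2 = 0" using a'(3) by simp
  have LM: "(- Lambda_poly q n g r, [:0, 1:]) \<in> M"
    using mod_mem[OF qc lin_0 lin_x, of n g r] unfolding M_def by (simp add: pcompose_x_left)
  obtain d1 d2 where d: "linearized q d1" "linearized q d2"
    "(- Lambda_poly q n g r, [:0, 1:]) = (pcompose d1 v1 + pcompose d2 u1, pcompose d1 v2 + pcompose d2 u2)"
    using decomp[OF LM] by blast
  have xeq: "pcompose d1 v2 + pcompose d2 u2 = [:0, 1:]" using d(3) by simp
  have invy: "poly d1 (poly v2 y) = y" if y: "y \<in> span_on q S ee" for y
  proof -
    have "y = poly (pcompose d1 v2 + pcompose d2 u2) y" using xeq by simp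
    also have "\<dots> = poly d1 (poly v2 y)" using ku2s y lin_poly0[OF q0 d(2)] by (simp add: poly_pcompose)
    finally show ?thesis by simp
  qed
  have injv2: "inj_on (poly v2) (span_on q S ee)" by (rule inj_on_inverseI[of _ "poly d1"]) (use invy in auto)
  have a1kill: "poly a1' z = 0" if z: "z \<in> poly v2 ` span_on q S ee" for z
  proof -
    obtain y where y: "y \<in> span_on q S ee" "z = poly v2 y" using z by auto
    have "0 = poly (pcompose a1' v2 + pcompose a2' u2) y" using z2' by simp
    also have "\<dots> = poly a1' z" using ku2s y lin_poly0[OF q0 a'(2)] by (simp add: poly_pcompose)
    finally show ?thesis by simp
  qed
  have "poly v2 ` span_on q S ee \<subseteq> {z. poly a1' z = 0}" using a1kill by auto
  hence "card (poly v2 ` span_on q S ee) \<le> card {z. poly a1' z = 0}"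
    by (rule card_mono[OF poly_roots_finite[OF a1nz]])
  also have "\<dots> \<le> degree a1'" by (rule card_poly_roots_bound[OF a1nz])
  finally have "q ^ t \<le> degree a1'" using card_image[OF injv2] spc by simp
  hence "q ^ t * degree v1 \<le> q ^ n" using dPi by simp
  moreover have "q ^ n = q ^ t * q ^ (n - t)" using tn by (simp add: power_add[symmetric])
  ultimately have "degree v1 \<le> q ^ (n - t)" using q2 by simp
  hence dv1: "degree v1 = q ^ (n - t)" using dv1lo by simp
  have qv1: "qdeg q v1 = n - t" by (rule qdeg_eq[OF q2 dv1])
  have w1: "wqdeg q k b1 = n - t" unfolding b1 using wqdeg_pos1[of v1 v2 q k] p1 qv1 by simp
  have w2: "wqdeg q k b2 = t + k - 1" unfolding b2 using wqdeg_pos2[of u2 u1 q k] p2 qu2 assms(4) by simp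
  show ?thesis using w1 w2 qu2 b2 unfolding t_def T_def by simp
qed


end
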